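(* For any positive integer $r$, $\mathrm{NCQSym}^r(\mathbf{x})$ is a Hopf algebra, namely a Hopf subalgebra of $\mathrm{NCQSym}(\mathbf{x})$ with product and coproduct inherited from $\mathrm{NCQSym}(\mathbf{x})$.
   Context: Let $\mathbf{x}=\mathbf{x}_1,\mathbf{x}_2,\dots$ be noncommuting variables. A set composition $\Phi=(\Phi_1|\cdots|\Phi_k)$ of a finite set $A$ is an ordered list of disjoint nonempty sets with union $A$; a set partition $\Pi=\Pi_1/\cdots/\Pi_l$ is an unordered such collection. $\mathrm{NCQSym}(\mathbf{x})$ is the set of bounded-degree formal power series $f$ in $\mathbf{x}$ such that for every set composition $\Phi$ of $[n]$ all monomials $\mathbf{x}_{i_1}\cdots\mathbf{x}_{i_n}$ with $i_j=i_\ell$ whenever $j,\ell$ lie in the same block and $i_j<i_\ell$ whenever $j\in\Phi_p,\ell\in\Phi_q$, $p<q$, have the same coefficient. Its product is multiplication of series; its coproduct is: evaluate $f$ on the ordered alphabet $\mathbf{x}_1<\mathbf{x}_2<\cdots<\mathbf{y}_1<\mathbf{y}_2<\cdots$, impose $\mathbf{x}_i\mathbf{y}_j=\mathbf{y}_j\mathbf{x}_i$ for all $i,j$, view the result as $\sum f_1(\mathbf{x})\otimes f_2(\mathbf{y})\in\mathrm{NCQSym}(\mathbf{x})\otimes\mathrm{NCQSym}(\mathbf{y})$ and replace $\mathbf{y}$ by $\mathbf{x}$. For a positive integer $r$, an $r$-set-composition of $[n]$ is a pair $(\Phi,\Pi)$ where $\Phi$ is a set composition of some $A\subseteq[n]$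 all of whose blocks have size $\ge r$ and $\Pi$ is a set partition of $[n]\setminus A$ all of whose blocks have size $<r$. Define $\mathbf{M}_{(\Phi,\Pi)}=\sum\mathbf{x}_{i_1}\cdots\mathbf{x}_{i_n}$ over all tuples with $i_j=i_k$ if and only if $j,k$ lie in the same block of $\Phi$ or of $\Pi$, and $i_j<i_k$ whenever $j\in\Phi_l$, $k\in\Phi_m$, $l<m$. Let $\mathrm{NCQSym}^r_n(\mathbf{x})$ be the $\mathbb{Q}$-span of $\{\mathbf{M}_{(\Phi,\Pi)}\}$ over $r$-set-compositions of $[n]$, and $\mathrm{NCQSym}^r(\mathbf{x})=\bigoplus_{n\ge0}\mathrm{NCQSym}^r_n(\mathbf{x})$. *)

theory Defs
  imports Complex_Main "HOL-Library.Disjoint_Sets"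
begin

text \<open>Noncommuting variables x_0 < x_1 < x_2 < ... are indexed by natural numbers; a monomial
  x_{i_1} ... x_{i_n} is the word [i_1, ..., i_n]. A formal power series over the rationals is
  its coefficient function on words.\<close>

type_synonym series = "nat list \<Rightarrow> rat"

text \<open>Elements of the (algebraic) tensor square are viewed as coefficient functions on pairs of
  words: (u, v) stands for the monomial x_u tensor x_v.\<close>

type_synonym series2 = "nat list \<times> nat list \<Rightarrow> rat"

definition bounded_degree :: "series \<Rightarrow> bool" where
  "bounded_degree f \<longleftrightarrow> (\<exists>d. \<forall>w. d < length w \<longrightarrow> f w = 0)"

definition set_composition :: "nat set list \<Rightarrow> nat set \<Rightarrow> bool" where
  "set_composition Phi A \<longleftrightarrow> distinct Phi \<and> partition_on A (set Phi)"

definition r_set_composition :: "nat \<Rightarrow> nat \<Rightarrow> nat set list \<Rightarrow> nat set set \<Rightarrow> bool" where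
  "r_set_composition r n Phi P \<longleftrightarrow>
     (\<exists>A. A \<subseteq> {1..n} \<and> set_composition Phi A \<and> (\<forall>B\<in>set Phi. r \<le> card B)
          \<and> partition_on ({1..n} - A) P \<and> (\<forall>B\<in>P. card B < r))"

text \<open>The word w = x_{i_1}...x_{i_n} (position j carries the letter w ! (j - 1)) is a monomial of
  M_(Phi,P) (for a pair of [n]): equal letters exactly at positions in a common block of
  Phi or P, and increasing letters along the blocks of Phi.\<close>

definition fits :: "nat \<Rightarrow> nat set list \<Rightarrow> nat set set \<Rightarrow> nat list \<Rightarrow> bool" where
  "fits n Phi P w \<longleftrightarrow> length w = n
     \<and> (\<forall>j\<in>{1..n}. \<forall>k\<in>{1..n}.
          (w ! (j - 1) = w ! (k - 1)) \<longleftrightarrow> (\<exists>B \<in> set Phi \<union> P. j \<in> B \<and> k \<in> B))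
     \<and> (\<forall>l m j k. l < m \<and> m < length Phi \<and> j \<in> Phi ! l \<and> k \<in> Phi ! m
          \<longrightarrow> w ! (j - 1) < w ! (k - 1))"

definition M :: "nat \<Rightarrow> nat set list \<Rightarrow> nat set set \<Rightarrow> series" where
  "M n Phi P = (\<lambda>w. if fits n Phi P w then 1 else 0)"

definition NCQSym :: "series set" where
  "NCQSym = {f. bounded_degree f \<and>
     (\<forall>n Phi. set_composition Phi {1..n} \<longrightarrow>
        (\<forall>w w'. fits n Phi {} w \<and> fits n Phi {} w' \<longrightarrow> f w = f w'))}"

definition lin_span :: "('a \<Rightarrow> rat) set \<Rightarrow> ('a \<Rightarrow> rat) set" where
  "lin_span B = {f. \<exists>S c. finite S \<and> S \<subseteq> B \<and> f = (\<lambda>x. \<Sum>b\<in>S. c b * b x)}"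

definition NCQSym_r :: "nat \<Rightarrow> series set" where
  "NCQSym_r r = lin_span {M n Phi P | n Phi P. r_set_composition r n Phi P}"

definition smult :: "series \<Rightarrow> series \<Rightarrow> series" where
  "smult f g = (\<lambda>w. \<Sum>k\<le>length w. f (take k w) * g (drop k w))"

definition sone :: series where
  "sone = (\<lambda>w. if w = [] then 1 else 0)"

definition counit :: "series \<Rightarrow> rat" where
  "counit f = f []"

definition pack_by :: "('a \<Rightarrow> 'a \<Rightarrow> bool) \<Rightarrow> 'a list \<Rightarrow> nat list" where
  "pack_by lt w = map (\<lambda>a. card {b \<in> set w. lt b a}) w"

text \<open>The ordered alphabet x_0 < x_1 < ... < y_0 < y_1 < ...: Inl i is x_i, Inr j is y_j.\<close>

fun xy_less :: "nat + nat \<Rightarrow> nat + nat \<Rightarrow> bool" where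
  "xy_less (Inl i) (Inl j) = (i < j)"
| "xy_less (Inl i) (Inr j) = True"
| "xy_less (Inr i) (Inl j) = False"
| "xy_less (Inr i) (Inr j) = (i < j)"

text \<open>Coproduct: evaluate f (quasisymmetric, so coefficients depend only on the pattern of a word)
  on the alphabet x < y, let the x's commute with the y's (collect all interleavings of
  x_u and y_v), and replace y by x.\<close>

definition coprod :: "series \<Rightarrow> series2" where
  "coprod f = (\<lambda>(u, v). \<Sum>w\<in>shuffles (map Inl u) (map Inr v). f (pack_by xy_less w))"

definition tensor :: "series \<Rightarrow> series \<Rightarrow> series2" where
  "tensor f g = (\<lambda>(u, v). f u * g v)"

text \<open>Tensor product V \<otimes> W of subspaces, realised inside the functions on pairs of words.\<close>

definition tensor_space :: "series set \<Rightarrow> series set \<Rightarrow> series2 set" where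
  "tensor_space V W = lin_span {tensor f g | f g. f \<in> V \<and> g \<in> W}"

definition is_antipode_on :: "series set \<Rightarrow> (series \<Rightarrow> series) \<Rightarrow> bool" where
  "is_antipode_on H S \<longleftrightarrow>
     (\<forall>f\<in>H. S f \<in> H)
   \<and> (\<forall>f\<in>H. \<forall>g\<in>H. \<forall>c::rat. S (\<lambda>w. c * f w + g w) = (\<lambda>w. c * S f w + S g w))
   \<and> (\<forall>f\<in>H. \<forall>k::nat. \<forall>a b. (\<forall>i<k. a i \<in> H \<and> b i \<in> H) \<and>
          coprod f = (\<lambda>p. \<Sum>i<k. tensor (a i) (b i) p) \<longrightarrow>
          (\<lambda>w. \<Sum>i<k. smult (S (a i)) (b i) w) = (\<lambda>w. counit f * sone w)
        \<and> (\<lambda>w. \<Sum>i<k. smult (a i) (S (b i)) w) = (\<lambda>w. counit f * sone w))"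

end

theory Submission
  imports Defs "HOL-Library.Product_Lexorder" "HOL-Library.Multiset"
begin

lemma pack_by_nth: "i < length w \<Longrightarrow> pack_by lt w ! i = card {b \<in> set w. lt b (w ! i)}"
  by (simp add: pack_by_def)

lemma length_pack_by[simp]: "length (pack_by lt w) = length w"
  by (simp add: pack_by_def)

lemma pack_by_Nil[simp]: "pack_by lt [] = []"
  by (simp add: pack_by_def)

lemma pack_map:
  assumes inj: "inj_on e (set t)"
    and ord: "\<forall>a\<in>set t. \<forall>b\<in>set t. lt' (e a) (e b) \<longleftrightarrow> lt a b"
  shows "pack_by lt' (map e t) = pack_by lt t"
proof -
  have "card {b \<in> e ` set t. lt' b (e a)} = card {b \<in> set t. lt b a}" if a: "a \<in> set t" for a
  proof -
    have "{b \<in> e ` set t. lt' b (e a)} = e ` {b \<in> set t. lt b a}"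
      using ord a by auto
    moreover have "card (e ` {b \<in> set t. lt b a}) = card {b \<in> set t. lt b a}"
      by (rule card_image) (rule inj_on_subset[OF inj], auto)
    ultimately show ?thesis by simp
  qed
  then show ?thesis by (auto simp: pack_by_def)
qed

lemma rank_strict_mono:
  fixes S :: "'a::linorder set"
  assumes "finite S" "q \<in> S" "q < q'"
  shows "card {s \<in> S. s < q} < card {s \<in> S. s < q'}"
  by (rule psubset_card_mono) (use assms in auto)

lemma strict_mono_iff:
  fixes g :: "'a::linorder \<Rightarrow> 'b::linorder"
  assumes "\<forall>p\<in>X. \<forall>q\<in>X. p < q \<longrightarrow> g p < g q" "p \<in> X" "q \<in> X"
  shows "g p < g q \<longleftrightarrow> p < q"
  using assms by (metis less_asym' linorder_neqE)

lemma strict_mono_inj: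
  fixes g :: "'a::linorder \<Rightarrow> 'b::linorder"
  assumes "\<forall>p\<in>X. \<forall>q\<in>X. p < q \<longrightarrow> g p < g q"
  shows "inj_on g X"
  using assms unfolding inj_on_def by (metis less_irrefl linorder_neqE)

lemma pack_mono:
  fixes g :: "'a::linorder \<Rightarrow> 'b::linorder"
  assumes "\<forall>p\<in>set t. \<forall>q\<in>set t. p < q \<longrightarrow> g p < g q"
  shows "pack_by (<) (map g t) = pack_by (<) t"
  by (rule pack_map[OF strict_mono_inj[OF assms]]) (use strict_mono_iff[OF assms] in blast)

lemma pack_pack:
  fixes t :: "'a::linorder list"
  shows "pack_by (<) (pack_by (<) t) = pack_by (<) t"
proof -
  have "pack_by (<) t = map (\<lambda>a. card {b \<in> set t. b < a}) t" by (simp add: pack_by_def)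
  moreover have "pack_by (<) (map (\<lambda>a. card {b \<in> set t. b < a}) t) = pack_by (<) t"
    by (rule pack_mono) (auto intro: rank_strict_mono)
  ultimately show ?thesis by simp
qed

lemma set_pack_by:
  fixes t :: "'a::linorder list"
  shows "set (pack_by (<) t) \<subseteq> {..<length t}"
proof
  fix x assume "x \<in> set (pack_by (<) t)"
  then obtain a where a: "a \<in> set t" "x = card {b \<in> set t. b < a}" by (auto simp: pack_by_def)
  have "card {b \<in> set t. b < a} < card (set t)"
    by (rule psubset_card_mono) (use a in auto)
  also have "\<dots> \<le> length t" by (rule card_length)
  finally show "x \<in> {..<length t}" using a by simp
qed

lemma shuffles_map: "shuffles (map g xs) (map g ys) = map g ` shuffles xs ys"
  by (induction xs ys rule: shuffles.induct) (auto simp: image_Un image_image)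

lemma sum_shuffles_map:
  assumes "inj_on g (set xs \<union> set ys)"
  shows "(\<Sum>t\<in>shuffles (map g xs) (map g ys). F t) = (\<Sum>t\<in>shuffles xs ys. F (map g t))"
proof -
  have "inj_on (map g) (shuffles xs ys)"
    unfolding inj_on_def
  proof (intro ballI impI)
    fix s t assume s: "s \<in> shuffles xs ys" and t: "t \<in> shuffles xs ys" and "map g s = map g t"
    then show "s = t" using map_inj_on[of g s t] assms set_shuffles[OF s] set_shuffles[OF t] by auto
  qed
  then show ?thesis by (simp add: shuffles_map sum.reindex)
qed

lemma sum_sh_mono:
  fixes g :: "'a::linorder \<Rightarrow> 'b::linorder"
  assumes "\<forall>p\<in>set xs \<union> set ys. \<forall>q\<in>set xs \<union> set ys. p < q \<longrightarrow> g p < g q"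
  shows "(\<Sum>t\<in>shuffles (map g xs) (map g ys). F (pack_by (<) t)) = (\<Sum>t\<in>shuffles xs ys. F (pack_by (<) t))"
proof -
  have "(\<Sum>t\<in>shuffles (map g xs) (map g ys). F (pack_by (<) t)) = (\<Sum>t\<in>shuffles xs ys. F (pack_by (<) (map g t)))"
    by (rule sum_shuffles_map[OF strict_mono_inj[OF assms]])
  also have "\<dots> = (\<Sum>t\<in>shuffles xs ys. F (pack_by (<) t))"
  proof (rule sum.cong[OF refl])
    fix t assume "t \<in> shuffles xs ys"
    then have "set t = set xs \<union> set ys" by (rule set_shuffles)
    then show "F (pack_by (<) (map g t)) = F (pack_by (<) t)" using assms by (simp add: pack_mono)
  qed
  finally show ?thesis .
qed

lemma sh_char:
  assumes "\<forall>x\<in>set xs. P x" "\<forall>y\<in>set ys. \<not> P y"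
  shows "t \<in> shuffles xs ys \<longleftrightarrow> filter P t = xs \<and> filter (\<lambda>x. \<not> P x) t = ys"
proof -
  have "t \<in> shuffles xs ys \<longleftrightarrow> partition P t = (xs, ys)"
    using inv_image_partition[of xs P ys] assms by (metis vimage_singleton_eq)
  then show ?thesis by (simp add: partition_filter_conv o_def)
qed

lemma coprod_alt:
  "coprod f (u, v) = (\<Sum>t\<in>shuffles (map (Pair (0::nat)) u) (map (Pair (1::nat)) v). f (pack_by (<) t))"
proof -
  define e :: "nat \<times> nat \<Rightarrow> nat + nat" where "e = (\<lambda>p. if fst p = 0 then Inl (snd p) else Inr (snd p))"
  have m1: "map Inl u = map e (map (Pair (0::nat)) u)" by (simp add: e_def)
  have m2: "map Inr v = map e (map (Pair (1::nat)) v)" by (simp add: e_def)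
  have inj: "inj_on e (set (map (Pair (0::nat)) u) \<union> set (map (Pair (1::nat)) v))"
    by (auto simp: e_def inj_on_def)
  have "coprod f (u, v) = (\<Sum>t\<in>shuffles (map e (map (Pair (0::nat)) u)) (map e (map (Pair (1::nat)) v)). f (pack_by xy_less t))"
    unfolding coprod_def prod.case by (subst m1, subst m2) (rule refl)
  also have "\<dots> = (\<Sum>t\<in>shuffles (map (Pair (0::nat)) u) (map (Pair (1::nat)) v). f (pack_by xy_less (map e t)))"
    by (rule sum_shuffles_map[OF inj])
  also have "\<dots> = (\<Sum>t\<in>shuffles (map (Pair (0::nat)) u) (map (Pair (1::nat)) v). f (pack_by (<) t))"
  proof (rule sum.cong[OF refl])
    fix t assume t: "t \<in> shuffles (map (Pair (0::nat)) u) (map (Pair (1::nat)) v)"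
    then have st: "set t = set (map (Pair (0::nat)) u) \<union> set (map (Pair (1::nat)) v)" by (rule set_shuffles)
    have "pack_by xy_less (map e t) = pack_by (<) t"
    proof (rule pack_map)
      show "inj_on e (set t)" using inj st by simp
      show "\<forall>a\<in>set t. \<forall>b\<in>set t. xy_less (e a) (e b) = (a < b)"
        using st by (auto simp: e_def less_prod_def)
    qed
    then show "f (pack_by xy_less (map e t)) = f (pack_by (<) t)" by simp
  qed
  finally show ?thesis .
qed

lemma pack_Pair[simp]: "pack_by (<) (map (Pair (c::nat)) x) = pack_by (<) (x::nat list)"
  by (rule pack_mono) auto

lemma coprod_right_Nil: "coprod f (u, []) = f (pack_by (<) u)"
proof -
  have "pack_by (<) (map (Pair (0::nat)) u) = pack_by (<) u"
    by (rule pack_mono) auto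
  then show ?thesis by (simp add: coprod_alt)
qed

lemma coprod_left_Nil: "coprod f ([], v) = f (pack_by (<) v)"
proof -
  have "pack_by (<) (map (Pair (1::nat)) v) = pack_by (<) v"
    by (rule pack_mono) auto
  then show ?thesis by (simp add: coprod_alt)
qed

definition T :: "nat list \<Rightarrow> series \<Rightarrow> series" where
  "T v f = (\<lambda>y. coprod f (y, v))"

definition U :: "nat list \<Rightarrow> series \<Rightarrow> series" where
  "U u f = (\<lambda>y. coprod f (u, y))"

lemma T_T_Nil: "T v (T [] f) = T v f"
  unfolding T_def by (rule ext) (simp add: coprod_alt coprod_right_Nil pack_pack)

lemma U_U_Nil: "U u (U [] f) = U u f"
  unfolding U_def by (rule ext) (simp add: coprod_alt coprod_left_Nil pack_pack)

lemma T_Nil_apply: "T w f [] = f (pack_by (<) w)"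
  by (simp add: T_def coprod_left_Nil)

lemma U_Nil_apply: "U w f [] = f (pack_by (<) w)"
  by (simp add: U_def coprod_right_Nil)

abbreviation c0 :: "nat list \<Rightarrow> (nat \<times> nat) list" where "c0 \<equiv> map (Pair 0)"
abbreviation c1 :: "nat list \<Rightarrow> (nat \<times> nat) list" where "c1 \<equiv> map (Pair 1)"
abbreviation c2 :: "nat list \<Rightarrow> (nat \<times> nat) list" where "c2 \<equiv> map (Pair 2)"

lemma inner_L:
  fixes x :: "(nat \<times> nat) list"
  shows "(\<Sum>t\<in>shuffles (c0 a) (c1 (pack_by (<) x)). F (pack_by (<) t))
       = (\<Sum>t\<in>shuffles (c0 a) (map (\<lambda>p. (Suc (fst p), snd p)) x). F (pack_by (<) t))"
proof -
  define g :: "nat \<times> nat \<Rightarrow> nat \<times> nat" where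
    "g = (\<lambda>p. if fst p = 0 then p else (1, card {q \<in> set x. q < (fst p - 1, snd p)}))"
  have m1: "map g (c0 a) = c0 a" by (simp add: g_def)
  have m2: "map g (map (\<lambda>p. (Suc (fst p), snd p)) x) = c1 (pack_by (<) x)"
    by (simp add: g_def pack_by_def)
  have mono: "\<forall>p\<in>set (c0 a) \<union> set (map (\<lambda>p. (Suc (fst p), snd p)) x).
      \<forall>q\<in>set (c0 a) \<union> set (map (\<lambda>p. (Suc (fst p), snd p)) x). p < q \<longrightarrow> g p < g q"
  proof (intro ballI impI)
    fix p q assume p: "p \<in> set (c0 a) \<union> set (map (\<lambda>p. (Suc (fst p), snd p)) x)"
      and q: "q \<in> set (c0 a) \<union> set (map (\<lambda>p. (Suc (fst p), snd p)) x)" and pq: "p < q"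
    show "g p < g q"
    proof (cases "fst p = 0")
      case True
      show ?thesis
      proof (cases "fst q = 0")
        case True
        then show ?thesis using \<open>fst p = 0\<close> pq by (simp add: g_def)
      next
        case False
        then show ?thesis using \<open>fst p = 0\<close> by (simp add: g_def less_prod_def)
      qed
    next
      case False
      then obtain p' where p': "p' \<in> set x" "p = (Suc (fst p'), snd p')" using p by auto
      have "fst q \<noteq> 0" using False pq by (auto simp: less_prod_def)
      then obtain q' where q': "q' \<in> set x" "q = (Suc (fst q'), snd q')" using q by auto
      have "p' < q'" using pq p' q' by (auto simp: less_prod_def)
      then have "card {s \<in> set x. s < p'} < card {s \<in> set x. s < q'}"
        by (intro rank_strict_mono) (use p' in auto)
      then show ?thesis using p' q' by (simp add: g_def less_prod_def)
    qed
  qed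
  show ?thesis
    using sum_sh_mono[OF mono, of F] by (simp only: m1 m2)
qed

lemma inner_R:
  fixes x :: "(nat \<times> nat) list"
  assumes x: "\<forall>p\<in>set x. fst p \<le> 1"
  shows "(\<Sum>t\<in>shuffles (c0 (pack_by (<) x)) (c1 b). F (pack_by (<) t))
       = (\<Sum>t\<in>shuffles x (c2 b). F (pack_by (<) t))"
proof -
  define g :: "nat \<times> nat \<Rightarrow> nat \<times> nat" where
    "g = (\<lambda>p. if fst p \<le> 1 then (0, card {q \<in> set x. q < p}) else (1, snd p))"
  have m1: "map g x = c0 (pack_by (<) x)" using x by (simp add: g_def pack_by_def)
  have m2: "map g (c2 b) = c1 b" by (simp add: g_def)
  have mono: "\<forall>p\<in>set x \<union> set (c2 b). \<forall>q\<in>set x \<union> set (c2 b). p < q \<longrightarrow> g p < g q"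
  proof (intro ballI impI)
    fix p q assume p: "p \<in> set x \<union> set (c2 b)" and q: "q \<in> set x \<union> set (c2 b)" and pq: "p < q"
    show "g p < g q"
    proof (cases "p \<in> set x")
      case True
      show ?thesis
      proof (cases "q \<in> set x")
        case True
        then have "card {s \<in> set x. s < p} < card {s \<in> set x. s < q}"
          using \<open>p \<in> set x\<close> pq by (intro rank_strict_mono) auto
        then show ?thesis using True \<open>p \<in> set x\<close> x by (simp add: g_def)
      next
        case False
        then show ?thesis using \<open>p \<in> set x\<close> x q by (auto simp: g_def less_prod_def)
      qed
    next
      case False
      then have pf: "fst p = 2" using p by auto
      have "q \<notin> set x" using pq pf x by (auto simp: less_prod_def)
      then have "fst q = 2" using q by auto
      then show ?thesis using pf pq x \<open>p \<notin> set x\<close> \<open>q \<notin> set x\<close> by (auto simp: g_def less_prod_def)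
    qed
  qed
  show ?thesis
    using sum_sh_mono[OF mono, of F] by (simp only: m1 m2)
qed

definition T3 :: "nat list \<Rightarrow> nat list \<Rightarrow> nat list \<Rightarrow> (nat \<times> nat) list set" where
  "T3 a y b = {t. filter (\<lambda>p. fst p = 0) t = c0 a \<and> filter (\<lambda>p. fst p = 1) t = c1 y
               \<and> filter (\<lambda>p. \<not> fst p \<le> 1) t = c2 b}"

lemma nested_L:
  "(\<Sum>z\<in>shuffles (c1 y) (c2 b). \<Sum>t\<in>shuffles (c0 a) z. G t) = sum G (T3 a y b)"
proof -
  have chz: "z \<in> shuffles (c1 y) (c2 b) \<longleftrightarrow> filter (\<lambda>p. fst p = 1) z = c1 y \<and> filter (\<lambda>p. \<not> fst p = 1) z = c2 b" for z
    by (rule sh_char) auto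
  have cht: "z \<in> shuffles (c1 y) (c2 b) \<Longrightarrow> t \<in> shuffles (c0 a) z \<longleftrightarrow> filter (\<lambda>p. fst p = 0) t = c0 a \<and> filter (\<lambda>p. \<not> fst p = 0) t = z" for z t
  proof -
    assume "z \<in> shuffles (c1 y) (c2 b)"
    then have "set z = set (c1 y) \<union> set (c2 b)" by (rule set_shuffles)
    then show ?thesis by (intro sh_char) auto
  qed
  have f1: "filter (\<lambda>p. fst p = 1) (filter (\<lambda>p. \<not> fst p = 0) t) = filter (\<lambda>p. fst p = (1::nat)) t" for t :: "(nat \<times> nat) list"
    by (simp add: filter_filter) (rule filter_cong, auto)
  have f2: "filter (\<lambda>p. \<not> fst p = 1) (filter (\<lambda>p. \<not> fst p = 0) t) = filter (\<lambda>p. \<not> fst p \<le> (1::nat)) t" for t :: "(nat \<times> nat) list"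
    by (simp add: filter_filter) (rule filter_cong, auto)
  have U: "(\<Union>z\<in>shuffles (c1 y) (c2 b). shuffles (c0 a) z) = T3 a y b"
  proof (intro equalityI subsetI)
    fix t assume "t \<in> (\<Union>z\<in>shuffles (c1 y) (c2 b). shuffles (c0 a) z)"
    then obtain z where z: "z \<in> shuffles (c1 y) (c2 b)" "t \<in> shuffles (c0 a) z" by blast
    then show "t \<in> T3 a y b" using chz cht f1 f2 unfolding T3_def by auto
  next
    fix t assume t: "t \<in> T3 a y b"
    define z where "z = filter (\<lambda>p. \<not> fst p = 0) t"
    have z: "z \<in> shuffles (c1 y) (c2 b)" using t chz f1 f2 unfolding T3_def z_def by auto
    moreover have "t \<in> shuffles (c0 a) z" using cht[OF z] t unfolding T3_def z_def by auto
    ultimately show "t \<in> (\<Union>z\<in>shuffles (c1 y) (c2 b). shuffles (c0 a) z)" by blast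
  qed
  have "sum G (\<Union>z\<in>shuffles (c1 y) (c2 b). shuffles (c0 a) z) = (\<Sum>z\<in>shuffles (c1 y) (c2 b). \<Sum>t\<in>shuffles (c0 a) z. G t)"
  proof (rule sum.UNION_disjoint)
    show "\<forall>i\<in>shuffles (c1 y) (c2 b). \<forall>j\<in>shuffles (c1 y) (c2 b). i \<noteq> j \<longrightarrow> shuffles (c0 a) i \<inter> shuffles (c0 a) j = {}"
    proof (intro ballI impI equalityI subsetI)
      fix i j t assume i: "i \<in> shuffles (c1 y) (c2 b)" and j: "j \<in> shuffles (c1 y) (c2 b)" and "i \<noteq> j"
        and t: "t \<in> shuffles (c0 a) i \<inter> shuffles (c0 a) j"
      have "filter (\<lambda>p. fst p \<noteq> 0) t = i" using cht[OF i] t by auto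
      moreover have "filter (\<lambda>p. fst p \<noteq> 0) t = j" using cht[OF j] t by auto
      ultimately show "t \<in> {}" using \<open>i \<noteq> j\<close> by simp
    qed simp
  qed auto
  then show ?thesis using U by simp
qed

lemma nested_R:
  "(\<Sum>x\<in>shuffles (c0 a) (c1 y). \<Sum>t\<in>shuffles x (c2 b). G t) = sum G (T3 a y b)"
proof -
  have chx: "x \<in> shuffles (c0 a) (c1 y) \<longleftrightarrow> filter (\<lambda>p. fst p = 0) x = c0 a \<and> filter (\<lambda>p. \<not> fst p = 0) x = c1 y" for x
    by (rule sh_char) auto
  have cht: "x \<in> shuffles (c0 a) (c1 y) \<Longrightarrow> t \<in> shuffles x (c2 b) \<longleftrightarrow> filter (\<lambda>p. fst p \<le> 1) t = x \<and> filter (\<lambda>p. \<not> fst p \<le> 1) t = c2 b" for x t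
  proof -
    assume "x \<in> shuffles (c0 a) (c1 y)"
    then have "set x = set (c0 a) \<union> set (c1 y)" by (rule set_shuffles)
    then show ?thesis by (intro sh_char) auto
  qed
  have f1: "filter (\<lambda>p. fst p = 0) (filter (\<lambda>p. fst p \<le> 1) t) = filter (\<lambda>p. fst p = (0::nat)) t" for t :: "(nat \<times> nat) list"
    by (simp add: filter_filter) (rule filter_cong, auto)
  have f2: "filter (\<lambda>p. \<not> fst p = 0) (filter (\<lambda>p. fst p \<le> 1) t) = filter (\<lambda>p. fst p = (1::nat)) t" for t :: "(nat \<times> nat) list"
    by (simp add: filter_filter) (rule filter_cong, auto)
  have U: "(\<Union>x\<in>shuffles (c0 a) (c1 y). shuffles x (c2 b)) = T3 a y b"
  proof (intro equalityI subsetI)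
    fix t assume "t \<in> (\<Union>x\<in>shuffles (c0 a) (c1 y). shuffles x (c2 b))"
    then obtain x where x: "x \<in> shuffles (c0 a) (c1 y)" "t \<in> shuffles x (c2 b)" by blast
    have h1: "filter (\<lambda>p. fst p \<le> 1) t = x" "filter (\<lambda>p. \<not> fst p \<le> 1) t = c2 b"
      using cht[OF x(1)] x(2) by auto
    have h2: "filter (\<lambda>p. fst p = 0) x = c0 a" "filter (\<lambda>p. \<not> fst p = 0) x = c1 y"
      using chx x(1) by auto
    have "filter (\<lambda>p. fst p = 0) t = c0 a" using f1[of t, unfolded h1(1) h2(1)] by simp
    moreover have "filter (\<lambda>p. fst p = 1) t = c1 y" using f2[of t, unfolded h1(1) h2(2)] by simp
    ultimately show "t \<in> T3 a y b" using h1(2) unfolding T3_def by simp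
  next
    fix t assume t: "t \<in> T3 a y b"
    define x where "x = filter (\<lambda>p. fst p \<le> 1) t"
    have x: "x \<in> shuffles (c0 a) (c1 y)" using t chx f1 f2 unfolding T3_def x_def by auto
    moreover have "t \<in> shuffles x (c2 b)" using cht[OF x] t unfolding T3_def x_def by auto
    ultimately show "t \<in> (\<Union>x\<in>shuffles (c0 a) (c1 y). shuffles x (c2 b))" by blast
  qed
  have "sum G (\<Union>x\<in>shuffles (c0 a) (c1 y). shuffles x (c2 b)) = (\<Sum>x\<in>shuffles (c0 a) (c1 y). \<Sum>t\<in>shuffles x (c2 b). G t)"
  proof (rule sum.UNION_disjoint)
    show "\<forall>i\<in>shuffles (c0 a) (c1 y). \<forall>j\<in>shuffles (c0 a) (c1 y). i \<noteq> j \<longrightarrow> shuffles i (c2 b) \<inter> shuffles j (c2 b) = {}"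
    proof (intro ballI impI equalityI subsetI)
      fix i j t assume i: "i \<in> shuffles (c0 a) (c1 y)" and j: "j \<in> shuffles (c0 a) (c1 y)" and "i \<noteq> j"
        and t: "t \<in> shuffles i (c2 b) \<inter> shuffles j (c2 b)"
      have "filter (\<lambda>p. fst p \<le> 1) t = i" using cht[OF i] t by auto
      moreover have "filter (\<lambda>p. fst p \<le> 1) t = j" using cht[OF j] t by auto
      ultimately show "t \<in> {}" using \<open>i \<noteq> j\<close> by simp
    qed simp
  qed auto
  then show ?thesis using U by simp
qed

lemma coassoc: "T b (U a f) = U a (T b f)"
proof (rule ext)
  fix y
  have "T b (U a f) y = (\<Sum>x\<in>shuffles (c0 y) (c1 b). \<Sum>t\<in>shuffles (c0 a) (c1 (pack_by (<) x)). f (pack_by (<) t))"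
    by (simp add: T_def U_def coprod_alt)
  also have "\<dots> = (\<Sum>x\<in>shuffles (c0 y) (c1 b). \<Sum>t\<in>shuffles (c0 a) (map (\<lambda>p. (Suc (fst p), snd p)) x). f (pack_by (<) t))"
    by (simp only: inner_L)
  also have "\<dots> = (\<Sum>z\<in>shuffles (map (\<lambda>p. (Suc (fst p), snd p)) (c0 y)) (map (\<lambda>p. (Suc (fst p), snd p)) (c1 b)). \<Sum>t\<in>shuffles (c0 a) z. f (pack_by (<) t))"
    by (rule sum_shuffles_map[symmetric]) (auto simp: inj_on_def)
  also have "\<dots> = (\<Sum>z\<in>shuffles (c1 y) (c2 b). \<Sum>t\<in>shuffles (c0 a) z. f (pack_by (<) t))"
    by (simp add: o_def numeral_2_eq_2)
  also have "\<dots> = (\<Sum>t\<in>T3 a y b. f (pack_by (<) t))"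
    by (rule nested_L)
  also have "\<dots> = (\<Sum>x\<in>shuffles (c0 a) (c1 y). \<Sum>t\<in>shuffles x (c2 b). f (pack_by (<) t))"
    by (rule nested_R[symmetric])
  also have "\<dots> = (\<Sum>x\<in>shuffles (c0 a) (c1 y). \<Sum>t\<in>shuffles (c0 (pack_by (<) x)) (c1 b). f (pack_by (<) t))"
  proof (rule sum.cong[OF refl])
    fix x assume "x \<in> shuffles (c0 a) (c1 y)"
    then have "\<forall>p\<in>set x. fst p \<le> 1" by (auto dest: set_shuffles)
    then show "(\<Sum>t\<in>shuffles x (c2 b). f (pack_by (<) t)) = (\<Sum>t\<in>shuffles (c0 (pack_by (<) x)) (c1 b). f (pack_by (<) t))"
      by (rule inner_R[symmetric])
  qed
  also have "\<dots> = U a (T b f) y"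
    by (simp add: T_def U_def coprod_alt)
  finally show "T b (U a f) y = U a (T b f) y" .
qed

function Sa :: "nat list \<Rightarrow> series \<Rightarrow> rat" where
  "Sa w f = (if w = [] then f [] else - (\<Sum>k<length w. Sa (take k w) (T (drop k w) f)))"
  by pat_completeness auto
termination by (relation "measure (\<lambda>(w, f). length w)") auto

function Sb :: "nat list \<Rightarrow> series \<Rightarrow> rat" where
  "Sb w f = (if w = [] then f [] else - (\<Sum>j\<in>{1..length w}. Sb (drop j w) (U (take j w) f)))"
  by pat_completeness auto
termination by (relation "measure (\<lambda>(w, f). length w)") auto

declare Sa.simps[simp del] Sb.simps[simp del]

lemma Sa_Nil[simp]: "Sa [] f = f []" by (simp add: Sa.simps)
lemma Sb_Nil[simp]: "Sb [] f = f []" by (simp add: Sb.simps)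
lemma Sa_Cons: "w \<noteq> [] \<Longrightarrow> Sa w f = - (\<Sum>k<length w. Sa (take k w) (T (drop k w) f))"
  by (simp add: Sa.simps)
lemma Sb_Cons: "w \<noteq> [] \<Longrightarrow> Sb w f = - (\<Sum>j\<in>{1..length w}. Sb (drop j w) (U (take j w) f))"
  by (simp add: Sb.simps)

lemma swap_tri:
  fixes n :: nat
  shows "(\<Sum>k\<in>{1..<n}. \<Sum>j\<in>{1..k}. G j k) = (\<Sum>j\<in>{1..<n}. \<Sum>k\<in>{j..<n}. G j k)"
proof -
  have "(\<Sum>k\<in>{1..<n}. \<Sum>j\<in>{1..k}. G j k) = (\<Sum>k\<in>{1..<n}. \<Sum>j\<in>{j \<in> {1..<n}. j \<le> k}. G j k)"
    by (intro sum.cong refl) (auto intro: le_less_trans)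
  also have "\<dots> = (\<Sum>j\<in>{1..<n}. \<Sum>k\<in>{k \<in> {1..<n}. j \<le> k}. G j k)"
    by (rule sum.swap_restrict) auto
  also have "\<dots> = (\<Sum>j\<in>{1..<n}. \<Sum>k\<in>{j..<n}. G j k)"
    by (rule sum.cong[OF refl]) (rule sum.cong, auto)
  finally show ?thesis .
qed

lemma T_Nil_U_Nil: "T w f [] = U w f []"
  by (simp add: T_Nil_apply U_Nil_apply)

lemma Sa_eq_Sb: "Sa w f = Sb w f"
proof (induction "length w" arbitrary: w f rule: less_induct)
  case less
  show ?case
  proof (cases "w = []")
    case True
    then show ?thesis by simp
  next
    case False
    define n where "n = length w"
    have n0: "0 < n" using False n_def by simp
    define G where "G = (\<lambda>j k. Sb (drop j (take k w)) (U (take j w) (T (drop k w) f)))"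
    have "Sa w f = - (\<Sum>k<n. Sa (take k w) (T (drop k w) f))"
      using Sa_Cons[OF False] n_def by simp
    also have "{..<n} = insert 0 {1..<n}" using n0 by auto
    also have "(\<Sum>k\<in>insert 0 {1..<n}. Sa (take k w) (T (drop k w) f))
        = T w f [] + (\<Sum>k\<in>{1..<n}. Sa (take k w) (T (drop k w) f))"
      by (subst sum.insert) auto
    also have "(\<Sum>k\<in>{1..<n}. Sa (take k w) (T (drop k w) f)) = (\<Sum>k\<in>{1..<n}. - (\<Sum>j\<in>{1..k}. G j k))"
    proof (rule sum.cong[OF refl])
      fix k assume k: "k \<in> {1..<n}"
      have ne: "take k w \<noteq> []" using k n_def by auto
      have lt: "length (take k w) < length w" using k n_def by auto
      have "Sa (take k w) (T (drop k w) f) = Sb (take k w) (T (drop k w) f)"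
        using less lt by blast
      also have "\<dots> = - (\<Sum>j\<in>{1..length (take k w)}. Sb (drop j (take k w)) (U (take j (take k w)) (T (drop k w) f)))"
        by (rule Sb_Cons[OF ne])
      also have "\<dots> = - (\<Sum>j\<in>{1..k}. G j k)"
        using k n_def by (auto simp: G_def min_def intro!: sum.cong)
      finally show "Sa (take k w) (T (drop k w) f) = - (\<Sum>j\<in>{1..k}. G j k)" .
    qed
    finally have SA: "Sa w f = - T w f [] + (\<Sum>k\<in>{1..<n}. \<Sum>j\<in>{1..k}. G j k)"
      by (simp add: sum_negf)
    have "Sb w f = - (\<Sum>j\<in>{1..n}. Sb (drop j w) (U (take j w) f))"
      using Sb_Cons[OF False] n_def by simp
    also have "{1..n} = insert n {1..<n}" using n0 by auto
    also have "(\<Sum>j\<in>insert n {1..<n}. Sb (drop j w) (U (take j w) f))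
        = U w f [] + (\<Sum>j\<in>{1..<n}. Sb (drop j w) (U (take j w) f))"
      by (subst sum.insert) (auto simp: n_def)
    also have "(\<Sum>j\<in>{1..<n}. Sb (drop j w) (U (take j w) f)) = (\<Sum>j\<in>{1..<n}. - (\<Sum>k\<in>{j..<n}. G j k))"
    proof (rule sum.cong[OF refl])
      fix j assume j: "j \<in> {1..<n}"
      have ne: "drop j w \<noteq> []" using j n_def by auto
      have lt: "length (drop j w) < length w" using j n_def by auto
      have "Sb (drop j w) (U (take j w) f) = Sa (drop j w) (U (take j w) f)"
        using less lt by metis
      also have "\<dots> = - (\<Sum>k'<length (drop j w). Sa (take k' (drop j w)) (T (drop k' (drop j w)) (U (take j w) f)))"
        by (rule Sa_Cons[OF ne])
      also have "\<dots> = - (\<Sum>k'<n - j. Sb (take k' (drop j w)) (T (drop (k' + j) w) (U (take j w) f)))"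
      proof -
        have "Sa (take k' (drop j w)) (T (drop k' (drop j w)) (U (take j w) f))
            = Sb (take k' (drop j w)) (T (drop (k' + j) w) (U (take j w) f))" if "k' < n - j" for k'
        proof -
          have "length (take k' (drop j w)) < length w" using that j n_def by auto
          then show ?thesis using less by (simp add: add.commute)
        qed
        then show ?thesis using n_def by (auto intro!: sum.cong)
      qed
      also have "(\<Sum>k'<n - j. Sb (take k' (drop j w)) (T (drop (k' + j) w) (U (take j w) f)))
          = (\<Sum>k\<in>{j..<n}. Sb (take (k - j) (drop j w)) (T (drop k w) (U (take j w) f)))"
      proof -
        have "(\<Sum>k\<in>{j..<n}. Sb (take (k - j) (drop j w)) (T (drop k w) (U (take j w) f)))
            = (\<Sum>k'\<in>{0..<n - j}. Sb (take (k' + j - j) (drop j w)) (T (drop (k' + j) w) (U (take j w) f)))"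
          using j sum.shift_bounds_nat_ivl[of "\<lambda>k. Sb (take (k - j) (drop j w)) (T (drop k w) (U (take j w) f))" 0 j "n - j"]
          by simp
        then show ?thesis by (simp add: atLeast0LessThan)
      qed
      also have "\<dots> = (\<Sum>k\<in>{j..<n}. G j k)"
        by (rule sum.cong[OF refl]) (simp add: G_def drop_take coassoc)
      finally show "Sb (drop j w) (U (take j w) f) = - (\<Sum>k\<in>{j..<n}. G j k)" .
    qed
    finally have SB: "Sb w f = - U w f [] + (\<Sum>j\<in>{1..<n}. \<Sum>k\<in>{j..<n}. G j k)"
      by (simp add: sum_negf)
    show ?thesis using SA SB swap_tri[of G n] T_Nil_U_Nil[of w f] by simp
  qed
qed

lemma T_lin:
  "T v (\<lambda>y. \<Sum>i\<in>I. c i * g i y) = (\<lambda>y. \<Sum>i\<in>I. c i * T v (g i) y)"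
  unfolding T_def coprod_def
  by (auto simp: sum_distrib_left intro!: ext sum.swap)

lemma Sa_lin:
  assumes "finite I"
  shows "Sa w (\<lambda>y. \<Sum>i\<in>I. c i * g i y) = (\<Sum>i\<in>I. c i * Sa w (g i))"
proof (induction "length w" arbitrary: w g rule: less_induct)
  case less
  show ?case
  proof (cases "w = []")
    case True
    then show ?thesis by simp
  next
    case False
    have "Sa w (\<lambda>y. \<Sum>i\<in>I. c i * g i y) = - (\<Sum>k<length w. Sa (take k w) (\<lambda>y. \<Sum>i\<in>I. c i * T (drop k w) (g i) y))"
      by (simp add: Sa_Cons[OF False] T_lin)
    also have "\<dots> = - (\<Sum>k<length w. \<Sum>i\<in>I. c i * Sa (take k w) (T (drop k w) (g i)))"
      using less False by (auto intro!: sum.cong)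
    also have "\<dots> = (\<Sum>i\<in>I. c i * Sa w (g i))"
      by (simp add: Sa_Cons[OF False] sum_distrib_left sum_negf[symmetric] sum.swap[of _ I])
    finally show ?thesis .
  qed
qed

lemma Sb_lin:
  assumes "finite I"
  shows "Sb w (\<lambda>y. \<Sum>i\<in>I. c i * g i y) = (\<Sum>i\<in>I. c i * Sb w (g i))"
  using Sa_lin[OF assms] by (simp add: Sa_eq_Sb)

lemma left_id:
  "(\<Sum>m\<le>length w. Sa (take m w) (T (drop m w) f)) = (if w = [] then f [] else 0)"
proof (cases "w = []")
  case True
  then show ?thesis by (simp add: T_Nil_apply)
next
  case False
  have "{..length w} = insert (length w) {..<length w}" by auto
  then have "(\<Sum>m\<le>length w. Sa (take m w) (T (drop m w) f))
      = Sa w (T [] f) + (\<Sum>m<length w. Sa (take m w) (T (drop m w) f))"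
    by simp
  also have "Sa w (T [] f) = - (\<Sum>m<length w. Sa (take m w) (T (drop m w) f))"
    by (simp add: Sa_Cons[OF False] T_T_Nil)
  finally show ?thesis using False by simp
qed

lemma right_id:
  "(\<Sum>m\<le>length w. Sb (drop m w) (U (take m w) f)) = (if w = [] then f [] else 0)"
proof (cases "w = []")
  case True
  then show ?thesis by (simp add: U_Nil_apply)
next
  case False
  have "{..length w} = insert 0 {1..length w}" by auto
  then have "(\<Sum>m\<le>length w. Sb (drop m w) (U (take m w) f))
      = Sb w (U [] f) + (\<Sum>m\<in>{1..length w}. Sb (drop m w) (U (take m w) f))"
    by simp
  also have "Sb w (U [] f) = - (\<Sum>m\<in>{1..length w}. Sb (drop m w) (U (take m w) f))"
    by (simp add: Sb_Cons[OF False] U_U_Nil)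
  finally show ?thesis using False by simp
qed

lemma antipode_left:
  fixes k :: nat
  assumes cop: "coprod f = (\<lambda>p. \<Sum>i<k. tensor (a i) (b i) p)"
  shows "(\<lambda>w. \<Sum>i<k. smult (\<lambda>x. Sa x (a i)) (b i) w) = (\<lambda>w. counit f * sone w)"
proof (rule ext)
  fix w
  have Tf: "T v f = (\<lambda>y. \<Sum>i<k. b i v * a i y)" for v
    unfolding T_def cop by (auto simp: tensor_def mult.commute)
  have "(\<Sum>i<k. smult (\<lambda>x. Sa x (a i)) (b i) w) = (\<Sum>m\<le>length w. \<Sum>i<k. b i (drop m w) * Sa (take m w) (a i))"
    unfolding smult_def by (subst sum.swap) (simp add: mult.commute)
  also have "\<dots> = (\<Sum>m\<le>length w. Sa (take m w) (T (drop m w) f))"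
    unfolding Tf
  proof (rule sum.cong[OF refl])
    fix m
    show "(\<Sum>i<k. b i (drop m w) * Sa (take m w) (a i)) = Sa (take m w) (\<lambda>y. \<Sum>i<k. b i (drop m w) * a i y)"
      by (rule Sa_lin[of "{..<k}" "take m w" "\<lambda>i. b i (drop m w)" a, symmetric]) simp
  qed
  also have "\<dots> = counit f * sone w"
    by (simp add: left_id counit_def sone_def)
  finally show "(\<Sum>i<k. smult (\<lambda>x. Sa x (a i)) (b i) w) = counit f * sone w" .
qed

lemma antipode_right:
  fixes k :: nat
  assumes cop: "coprod f = (\<lambda>p. \<Sum>i<k. tensor (a i) (b i) p)"
  shows "(\<lambda>w. \<Sum>i<k. smult (a i) (\<lambda>x. Sa x (b i)) w) = (\<lambda>w. counit f * sone w)"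
proof (rule ext)
  fix w
  have Uf: "U u f = (\<lambda>y. \<Sum>i<k. a i u * b i y)" for u
    unfolding U_def cop by (auto simp: tensor_def)
  have "(\<Sum>i<k. smult (a i) (\<lambda>x. Sa x (b i)) w) = (\<Sum>m\<le>length w. \<Sum>i<k. a i (take m w) * Sb (drop m w) (b i))"
    unfolding smult_def by (subst sum.swap) (simp add: Sa_eq_Sb)
  also have "\<dots> = (\<Sum>m\<le>length w. Sb (drop m w) (U (take m w) f))"
    unfolding Uf
  proof (rule sum.cong[OF refl])
    fix m
    show "(\<Sum>i<k. a i (take m w) * Sb (drop m w) (b i)) = Sb (drop m w) (\<lambda>y. \<Sum>i<k. a i (take m w) * b i y)"
      by (rule Sb_lin[of "{..<k}" "drop m w" "\<lambda>i. a i (take m w)" b, symmetric]) simp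
  qed
  also have "\<dots> = counit f * sone w"
    by (simp add: right_id counit_def sone_def)
  finally show "(\<Sum>i<k. smult (a i) (\<lambda>x. Sa x (b i)) w) = counit f * sone w" .
qed

definition equiv_r :: "nat \<Rightarrow> 'a::linorder list \<Rightarrow> 'b::linorder list \<Rightarrow> bool" where
  "equiv_r r w w' \<longleftrightarrow> (\<exists>\<phi>. map \<phi> w = w' \<and> inj_on \<phi> (set w) \<and>
     (\<forall>a\<in>set w. \<forall>b\<in>set w. r \<le> count_list w a \<longrightarrow> r \<le> count_list w b \<longrightarrow> (a < b \<longleftrightarrow> \<phi> a < \<phi> b)))"

lemma equiv_refl: "equiv_r r w w"
  unfolding equiv_r_def by (rule exI[of _ id]) auto

lemma equiv_sym:
  assumes "equiv_r r w w'" shows "equiv_r r w' w"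
proof -
  obtain \<phi> where m: "map \<phi> w = w'" and inj: "inj_on \<phi> (set w)"
    and ord: "\<forall>a\<in>set w. \<forall>b\<in>set w. r \<le> count_list w a \<longrightarrow> r \<le> count_list w b \<longrightarrow> (a < b \<longleftrightarrow> \<phi> a < \<phi> b)"
    using assms unfolding equiv_r_def by blast
  define \<psi> where "\<psi> = inv_into (set w) \<phi>"
  have sw: "set w' = \<phi> ` set w" using m by auto
  have "map \<psi> w' = w" using m inj by (auto simp: \<psi>_def map_idI)
  moreover have "inj_on \<psi> (set w')" using sw by (simp add: \<psi>_def inj_on_inv_into)
  moreover have "\<forall>a\<in>set w'. \<forall>b\<in>set w'. r \<le> count_list w' a \<longrightarrow> r \<le> count_list w' b \<longrightarrow> (a < b \<longleftrightarrow> \<psi> a < \<psi> b)"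
  proof (intro ballI impI)
    fix a' b' assume a': "a' \<in> set w'" and b': "b' \<in> set w'" and ca: "r \<le> count_list w' a'" and cb: "r \<le> count_list w' b'"
    obtain a where a: "a \<in> set w" "a' = \<phi> a" using a' sw by auto
    obtain b where b: "b \<in> set w" "b' = \<phi> b" using b' sw by auto
    have "count_list w' a' = count_list w a" using a inj m count_list_inj_map by metis
    moreover have "count_list w' b' = count_list w b" using b inj m count_list_inj_map by metis
    ultimately show "a' < b' \<longleftrightarrow> \<psi> a' < \<psi> b'"
      using ord a b ca cb inj by (simp add: \<psi>_def)
  qed
  ultimately show ?thesis unfolding equiv_r_def by blast
qed

lemma equiv_trans:
  assumes "equiv_r r w1 w2" "equiv_r r w2 w3" shows "equiv_r r w1 w3"
proof -
  obtain \<phi> where m: "map \<phi> w1 = w2" and inj: "inj_on \<phi> (set w1)"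
    and ord: "\<forall>a\<in>set w1. \<forall>b\<in>set w1. r \<le> count_list w1 a \<longrightarrow> r \<le> count_list w1 b \<longrightarrow> (a < b \<longleftrightarrow> \<phi> a < \<phi> b)"
    using assms(1) unfolding equiv_r_def by blast
  obtain \<psi> where m2: "map \<psi> w2 = w3" and inj2: "inj_on \<psi> (set w2)"
    and ord2: "\<forall>a\<in>set w2. \<forall>b\<in>set w2. r \<le> count_list w2 a \<longrightarrow> r \<le> count_list w2 b \<longrightarrow> (a < b \<longleftrightarrow> \<psi> a < \<psi> b)"
    using assms(2) unfolding equiv_r_def by blast
  have sw: "set w2 = \<phi> ` set w1" using m by auto
  have "map (\<psi> \<circ> \<phi>) w1 = w3" using m[symmetric] m2[symmetric] by simp
  moreover have "inj_on (\<psi> \<circ> \<phi>) (set w1)" using inj inj2 sw by (simp add: comp_inj_on)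
  moreover have "\<forall>a\<in>set w1. \<forall>b\<in>set w1. r \<le> count_list w1 a \<longrightarrow> r \<le> count_list w1 b \<longrightarrow> (a < b \<longleftrightarrow> (\<psi> \<circ> \<phi>) a < (\<psi> \<circ> \<phi>) b)"
  proof (intro ballI impI)
    fix a b assume a: "a \<in> set w1" and b: "b \<in> set w1" and ca: "r \<le> count_list w1 a" and cb: "r \<le> count_list w1 b"
    have "count_list w2 (\<phi> a) = count_list w1 a" using a inj m count_list_inj_map by metis
    moreover have "count_list w2 (\<phi> b) = count_list w1 b" using b inj m count_list_inj_map by metis
    ultimately show "a < b \<longleftrightarrow> (\<psi> \<circ> \<phi>) a < (\<psi> \<circ> \<phi>) b"
      using ord ord2 a b ca cb sw by auto
  qed
  ultimately show ?thesis unfolding equiv_r_def by blast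
qed

lemma equiv_length: "equiv_r r w w' \<Longrightarrow> length w' = length w"
  unfolding equiv_r_def by auto

lemma equiv_Nil: "equiv_r r w w' \<Longrightarrow> w = [] \<longleftrightarrow> w' = []"
  unfolding equiv_r_def by auto

lemma count_take_le: "count_list (take k w) a \<le> count_list w a"
  using count_list_append[of "take k w" "drop k w" a] by simp

lemma count_drop_le: "count_list (drop k w) a \<le> count_list w a"
  using count_list_append[of "take k w" "drop k w" a] by simp

lemma equiv_take:
  assumes "equiv_r r w w'" shows "equiv_r r (take k w) (take k w')"
proof -
  obtain \<phi> where m: "map \<phi> w = w'" and inj: "inj_on \<phi> (set w)"
    and ord: "\<forall>a\<in>set w. \<forall>b\<in>set w. r \<le> count_list w a \<longrightarrow> r \<le> count_list w b \<longrightarrow> (a < b \<longleftrightarrow> \<phi> a < \<phi> b)"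
    using assms unfolding equiv_r_def by blast
  have "map \<phi> (take k w) = take k w'" using m[symmetric] by (simp add: take_map)
  moreover have "inj_on \<phi> (set (take k w))" using inj by (rule inj_on_subset) (rule set_take_subset)
  moreover have "\<forall>a\<in>set (take k w). \<forall>b\<in>set (take k w). r \<le> count_list (take k w) a \<longrightarrow> r \<le> count_list (take k w) b \<longrightarrow> (a < b \<longleftrightarrow> \<phi> a < \<phi> b)"
    using ord count_take_le[of k w] set_take_subset[of k w] by (meson le_trans subsetD)
  ultimately show ?thesis unfolding equiv_r_def by blast
qed

lemma equiv_drop:
  assumes "equiv_r r w w'" shows "equiv_r r (drop k w) (drop k w')"
proof -
  obtain \<phi> where m: "map \<phi> w = w'" and inj: "inj_on \<phi> (set w)"
    and ord: "\<forall>a\<in>set w. \<forall>b\<in>set w. r \<le> count_list w a \<longrightarrow> r \<le> count_list w b \<longrightarrow> (a < b \<longleftrightarrow> \<phi> a < \<phi> b)"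
    using assms unfolding equiv_r_def by blast
  have "map \<phi> (drop k w) = drop k w'" using m[symmetric] by (simp add: drop_map)
  moreover have "inj_on \<phi> (set (drop k w))" using inj by (rule inj_on_subset) (rule set_drop_subset)
  moreover have "\<forall>a\<in>set (drop k w). \<forall>b\<in>set (drop k w). r \<le> count_list (drop k w) a \<longrightarrow> r \<le> count_list (drop k w) b \<longrightarrow> (a < b \<longleftrightarrow> \<phi> a < \<phi> b)"
    using ord count_drop_le[of k w] set_drop_subset[of k w] by (meson le_trans subsetD)
  ultimately show ?thesis unfolding equiv_r_def by blast
qed

lemma equiv_mono_map:
  fixes g :: "'a::linorder \<Rightarrow> 'b::linorder"
  assumes "\<forall>p\<in>set t. \<forall>q\<in>set t. p < q \<longrightarrow> g p < g q"
  shows "equiv_r r t (map g t)"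
  unfolding equiv_r_def
  using strict_mono_inj[OF assms] strict_mono_iff[OF assms] by blast

lemma equiv_pack:
  fixes t :: "'a::linorder list"
  shows "equiv_r r t (pack_by (<) t)"
proof -
  have "pack_by (<) t = map (\<lambda>a. card {b \<in> set t. b < a}) t" by (simp add: pack_by_def)
  moreover have "equiv_r r t (map (\<lambda>a. card {b \<in> set t. b < a}) t)"
    by (rule equiv_mono_map) (auto intro: rank_strict_mono)
  ultimately show ?thesis by simp
qed

definition Hc :: "nat \<Rightarrow> series set" where
  "Hc r = {f. bounded_degree f \<and> (\<forall>w w' :: nat list. equiv_r r w w' \<longrightarrow> f w = f w')}"

lemma Hc_D: "f \<in> Hc r \<Longrightarrow> equiv_r r w w' \<Longrightarrow> f w = f w'"
  by (simp add: Hc_def)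

lemma Hc_zero: "(\<lambda>w. 0) \<in> Hc r"
  by (simp add: Hc_def bounded_degree_def)

lemma Hc_lin: "f \<in> Hc r \<Longrightarrow> g \<in> Hc r \<Longrightarrow> (\<lambda>w. c * f w + g w) \<in> Hc r"
proof -
  assume f: "f \<in> Hc r" and g: "g \<in> Hc r"
  obtain d1 where d1: "\<forall>w. d1 < length w \<longrightarrow> f w = 0" using f by (auto simp: Hc_def bounded_degree_def)
  obtain d2 where d2: "\<forall>w. d2 < length w \<longrightarrow> g w = 0" using g by (auto simp: Hc_def bounded_degree_def)
  have "bounded_degree (\<lambda>w. c * f w + g w)"
    unfolding bounded_degree_def by (rule exI[of _ "max d1 d2"]) (simp add: d1 d2)
  then show ?thesis using f g by (auto simp: Hc_def)
qed

lemma inj_g: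
  fixes u v :: "nat list"
  assumes iu: "inj_on \<phi>u (set u)" and iv: "inj_on \<phi>v (set v)"
  shows "inj_on (\<lambda>p::nat \<times> nat. if fst p = 0 then (0::nat, \<phi>u (snd p)) else (1, \<phi>v (snd p))) (set (c0 u) \<union> set (c1 v))"
proof (rule inj_onI)
  fix p q assume p: "p \<in> set (c0 u) \<union> set (c1 v)" and q: "q \<in> set (c0 u) \<union> set (c1 v)"
    and e: "(if fst p = 0 then (0::nat, \<phi>u (snd p)) else (1, \<phi>v (snd p))) = (if fst q = 0 then (0::nat, \<phi>u (snd q)) else (1, \<phi>v (snd q)))"
  consider (a) a b where "p = (0, a)" "q = (0, b)" "a \<in> set u" "b \<in> set u"
      | (b) a b where "p = (0, a)" "q = (1, b)"
      | (c) a b where "p = (1, a)" "q = (0, b)"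
      | (d) a b where "p = (1, a)" "q = (1, b)" "a \<in> set v" "b \<in> set v"
    using p q by auto
  then show "p = q"
  proof cases
    case a
    then have "\<phi>u a = \<phi>u b" using e by simp
    then show ?thesis using a inj_onD[OF iu] by simp
  next
    case b
    then show ?thesis using e by simp
  next
    case c
    then show ?thesis using e by simp
  next
    case d
    then have "\<phi>v a = \<phi>v b" using e by simp
    then show ?thesis using d inj_onD[OF iv] by simp
  qed
qed

lemma equiv_shuffle_map:
  fixes u v u' v' :: "nat list"
  assumes t: "t \<in> shuffles (c0 u) (c1 v)"
    and pu: "map \<phi>u u = u'" "inj_on \<phi>u (set u)"
      "\<forall>a\<in>set u. \<forall>b\<in>set u. r \<le> count_list u a \<longrightarrow> r \<le> count_list u b \<longrightarrow> (a < b \<longleftrightarrow> \<phi>u a < \<phi>u b)"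
    and pv: "map \<phi>v v = v'" "inj_on \<phi>v (set v)"
      "\<forall>a\<in>set v. \<forall>b\<in>set v. r \<le> count_list v a \<longrightarrow> r \<le> count_list v b \<longrightarrow> (a < b \<longleftrightarrow> \<phi>v a < \<phi>v b)"
    and g: "g = (\<lambda>p. if fst p = 0 then (0::nat, \<phi>u (snd p)) else (1, \<phi>v (snd p)))"
  shows "equiv_r r t (map g t)"
proof -
  have st: "set t = set (c0 u) \<union> set (c1 v)" by (rule set_shuffles[OF t])
  have ms: "mset t = mset (c0 u) + mset (c1 v)" by (rule mset_shuffles[OF t])
  have cnt0: "count_list t (0, a) = count_list u a" for a
  proof -
    have "count_list t (0, a) = count (mset t) (0, a)" by (simp add: count_mset)
    also have "\<dots> = count_list (c0 u) (0, a) + count_list (c1 v) (0, a)" by (simp only: ms count_union count_mset)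
    also have "count_list (c0 u) (0, a) = count_list u a" by (rule count_list_map_conv) (simp add: inj_def)
    also have "count_list (c1 v) (0, a) = 0" by (rule count_notin) auto
    finally show ?thesis by simp
  qed
  have cnt1: "count_list t (1, a) = count_list v a" for a
  proof -
    have "count_list t (1, a) = count (mset t) (1, a)" by (simp add: count_mset)
    also have "\<dots> = count_list (c0 u) (1, a) + count_list (c1 v) (1, a)" by (simp only: ms count_union count_mset)
    also have "count_list (c1 v) (1, a) = count_list v a" by (rule count_list_map_conv) (simp add: inj_def)
    also have "count_list (c0 u) (1, a) = 0" by (rule count_notin) auto
    finally show ?thesis by simp
  qed
  have "inj_on g (set t)" using inj_g[OF pu(2) pv(2)] st by (simp add: g)
  moreover have "\<forall>p\<in>set t. \<forall>q\<in>set t. r \<le> count_list t p \<longrightarrow> r \<le> count_list t q \<longrightarrow> (p < q \<longleftrightarrow> g p < g q)"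
  proof (intro ballI impI)
    fix p q assume p: "p \<in> set t" and q: "q \<in> set t" and cp: "r \<le> count_list t p" and cq: "r \<le> count_list t q"
    consider (a) a b where "p = (0, a)" "q = (0, b)" "a \<in> set u" "b \<in> set u"
      | (b) a b where "p = (0, a)" "q = (1, b)"
      | (c) a b where "p = (1, a)" "q = (0, b)"
      | (d) a b where "p = (1, a)" "q = (1, b)" "a \<in> set v" "b \<in> set v"
      using p q st by auto
    then show "p < q \<longleftrightarrow> g p < g q"
    proof cases
      case a
      then show ?thesis using pu(3) cp cq cnt0 by (auto simp: g less_prod_def)
    next
      case b
      then show ?thesis by (auto simp: g less_prod_def)
    next
      case c
      then show ?thesis by (auto simp: g less_prod_def)
    next
      case d
      then show ?thesis using pv(3) cp cq cnt1 by (auto simp: g less_prod_def)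
    qed
  qed
  ultimately show ?thesis unfolding equiv_r_def by blast
qed

lemma coprod_equiv:
  fixes u v u' v' :: "nat list"
  assumes f: "f \<in> Hc r" and eu: "equiv_r r u u'" and ev: "equiv_r r v v'"
  shows "coprod f (u, v) = coprod f (u', v')"
proof -
  obtain \<phi>u where pu: "map \<phi>u u = u'" "inj_on \<phi>u (set u)"
      "\<forall>a\<in>set u. \<forall>b\<in>set u. r \<le> count_list u a \<longrightarrow> r \<le> count_list u b \<longrightarrow> (a < b \<longleftrightarrow> \<phi>u a < \<phi>u b)"
    using eu unfolding equiv_r_def by blast
  obtain \<phi>v where pv: "map \<phi>v v = v'" "inj_on \<phi>v (set v)"
      "\<forall>a\<in>set v. \<forall>b\<in>set v. r \<le> count_list v a \<longrightarrow> r \<le> count_list v b \<longrightarrow> (a < b \<longleftrightarrow> \<phi>v a < \<phi>v b)"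
    using ev unfolding equiv_r_def by blast
  define g where "g = (\<lambda>p::nat \<times> nat. if fst p = 0 then (0::nat, \<phi>u (snd p)) else (1, \<phi>v (snd p)))"
  have m1: "map g (c0 u) = c0 u'" using pu(1) by (auto simp: g_def)
  have m2: "map g (c1 v) = c1 v'" using pv(1) by (auto simp: g_def)
  have inj: "inj_on g (set (c0 u) \<union> set (c1 v))" using inj_g[OF pu(2) pv(2)] by (simp add: g_def)
  have "coprod f (u', v') = (\<Sum>t\<in>shuffles (map g (c0 u)) (map g (c1 v)). f (pack_by (<) t))"
    by (simp only: coprod_alt m1 m2)
  also have "\<dots> = (\<Sum>t\<in>shuffles (c0 u) (c1 v). f (pack_by (<) (map g t)))"
    by (rule sum_shuffles_map[OF inj])
  also have "\<dots> = (\<Sum>t\<in>shuffles (c0 u) (c1 v). f (pack_by (<) t))"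
  proof (rule sum.cong[OF refl])
    fix t assume t: "t \<in> shuffles (c0 u) (c1 v)"
    have "equiv_r r t (map g t)" by (rule equiv_shuffle_map[OF t pu pv g_def])
    then have "equiv_r r (pack_by (<) t) (pack_by (<) (map g t))"
      using equiv_pack equiv_sym equiv_trans by metis
    then show "f (pack_by (<) (map g t)) = f (pack_by (<) t)" using f by (simp add: Hc_D)
  qed
  also have "\<dots> = coprod f (u, v)" by (simp only: coprod_alt)
  finally show ?thesis by simp
qed

lemma coprod_bounded:
  assumes "\<forall>w. d < length w \<longrightarrow> f w = 0" "d < length u + length v"
  shows "coprod f (u, v) = 0"
  unfolding coprod_alt using assms by (auto intro!: sum.neutral dest: length_shuffles)

lemma T_Hc: "f \<in> Hc r \<Longrightarrow> T v f \<in> Hc r"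
proof -
  assume f: "f \<in> Hc r"
  obtain d where d: "\<forall>w. d < length w \<longrightarrow> f w = 0" using f by (auto simp: Hc_def bounded_degree_def)
  have "bounded_degree (T v f)"
    unfolding bounded_degree_def T_def by (rule exI[of _ d]) (auto intro: coprod_bounded[OF d])
  moreover have "T v f w = T v f w'" if "equiv_r r w w'" for w w' :: "nat list"
    unfolding T_def by (rule coprod_equiv[OF f that equiv_refl])
  ultimately show ?thesis by (auto simp: Hc_def)
qed

lemma smult_Hc: "f \<in> Hc r \<Longrightarrow> g \<in> Hc r \<Longrightarrow> smult f g \<in> Hc r"
proof -
  assume f: "f \<in> Hc r" and g: "g \<in> Hc r"
  obtain d1 where d1: "\<forall>w. d1 < length w \<longrightarrow> f w = 0" using f by (auto simp: Hc_def bounded_degree_def)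
  obtain d2 where d2: "\<forall>w. d2 < length w \<longrightarrow> g w = 0" using g by (auto simp: Hc_def bounded_degree_def)
  have "bounded_degree (smult f g)"
    unfolding bounded_degree_def smult_def
  proof (rule exI[of _ "d1 + d2"], intro allI impI)
    fix w :: "nat list" assume w: "d1 + d2 < length w"
    show "(\<Sum>k\<le>length w. f (take k w) * g (drop k w)) = 0"
    proof (rule sum.neutral, rule ballI)
      fix k assume "k \<in> {..length w}"
      show "f (take k w) * g (drop k w) = 0"
      proof (cases "d1 < k")
        case True
        then show ?thesis using d1 w by simp
      next
        case False
        then show ?thesis using d2 w by simp
      qed
    qed
  qed
  moreover have "smult f g w = smult f g w'" if e: "equiv_r r w w'" for w w' :: "nat list"
    unfolding smult_def using equiv_length[OF e] Hc_D[OF f equiv_take[OF e]] Hc_D[OF g equiv_drop[OF e]]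
    by simp
  ultimately show ?thesis by (auto simp: Hc_def)
qed

lemma Sa_zero_fun: "Sa w (\<lambda>y. 0) = 0"
  using Sa_lin[of "{}" w "\<lambda>_. 0" "\<lambda>_ _. 0"] by simp

lemma Sa_bounded:
  assumes "\<forall>y. d < length y \<longrightarrow> f y = 0" "d < length w"
  shows "Sa w f = 0"
  using assms
proof (induction "length w" arbitrary: w f d rule: less_induct)
  case less
  have ne: "w \<noteq> []" using less.prems by auto
  have "Sa (take k w) (T (drop k w) f) = 0" if k: "k < length w" for k
  proof (cases "k = 0")
    case True
    then show ?thesis using less.prems by (simp add: T_def coprod_bounded)
  next
    case False
    have vanish: "\<forall>y. d - (length w - k) < length y \<longrightarrow> T (drop k w) f y = 0"
      unfolding T_def using less.prems k False by (auto intro!: coprod_bounded[of d])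
    show ?thesis
      by (rule less.hyps[OF _ vanish]) (use k False less.prems in auto)
  qed
  then show ?case by (simp add: Sa_Cons[OF ne])
qed

lemma Sa_Hc: "f \<in> Hc r \<Longrightarrow> (\<lambda>w. Sa w f) \<in> Hc r"
proof -
  assume f: "f \<in> Hc r"
  obtain d where d: "\<forall>w. d < length w \<longrightarrow> f w = 0" using f by (auto simp: Hc_def bounded_degree_def)
  have "bounded_degree (\<lambda>w. Sa w f)"
    unfolding bounded_degree_def using Sa_bounded[OF d] by blast
  moreover have "\<forall>g\<in>Hc r. Sa w g = Sa w' g" if "equiv_r r w w'" for w w' :: "nat list"
    using that
  proof (induction "length w" arbitrary: w w' rule: less_induct)
    case less
    show ?case
    proof (cases "w = []")
      case True
      then show ?thesis using less.prems equiv_Nil by fastforce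
    next
      case False
      have ne': "w' \<noteq> []" using less.prems equiv_Nil False by blast
      have len: "length w' = length w" using equiv_length[OF less.prems] .
      show ?thesis
      proof
        fix g assume g: "g \<in> Hc r"
        have "Sa (take k w) (T (drop k w) g) = Sa (take k w') (T (drop k w') g)" if k: "k < length w" for k
        proof -
          have "T (drop k w) g = T (drop k w') g"
            unfolding T_def using coprod_equiv[OF g equiv_refl equiv_drop[OF less.prems]] by auto
          moreover have "Sa (take k w) (T (drop k w') g) = Sa (take k w') (T (drop k w') g)"
            using less.hyps[of "take k w" "take k w'"] k equiv_take[OF less.prems] T_Hc[OF g] by auto
          ultimately show ?thesis by simp
        qed
        then show "Sa w g = Sa w' g" by (simp add: Sa_Cons[OF False] Sa_Cons[OF ne'] len)
      qed
    qed
  qed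
  ultimately show ?thesis using f by (auto simp: Hc_def)
qed

definition blocks_ok :: "nat \<Rightarrow> nat set list \<Rightarrow> nat set set \<Rightarrow> bool" where
  "blocks_ok n Phi P \<longleftrightarrow> (\<forall>p\<in>{1..n}. \<exists>!B. B \<in> set Phi \<union> P \<and> p \<in> B) \<and> (\<forall>B\<in>set Phi \<union> P. B \<subseteq> {1..n})"

lemma rsc_blocks_ok:
  assumes "r_set_composition r n Phi P"
  shows "blocks_ok n Phi P" "distinct Phi" "\<forall>B\<in>P. card B < r" "\<forall>B\<in>set Phi. r \<le> card B"
proof -
  obtain A where A: "A \<subseteq> {1..n}" "distinct Phi" "partition_on A (set Phi)" "\<forall>B\<in>set Phi. r \<le> card B"
    "partition_on ({1..n} - A) P" "\<forall>B\<in>P. card B < r"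
    using assms unfolding r_set_composition_def set_composition_def by blast
  show "distinct Phi" "\<forall>B\<in>P. card B < r" "\<forall>B\<in>set Phi. r \<le> card B" using A by auto
  have U1: "\<Union>(set Phi) = A" and D1: "disjoint (set Phi)" using A(3) by (auto simp: partition_on_def)
  have U2: "\<Union>P = {1..n} - A" and D2: "disjoint P" using A(5) by (auto simp: partition_on_def)
  have "\<exists>!B. B \<in> set Phi \<union> P \<and> p \<in> B" if p: "p \<in> {1..n}" for p
  proof (cases "p \<in> A")
    case True
    then obtain B where B: "B \<in> set Phi" "p \<in> B" using U1 by blast
    show ?thesis
    proof (rule ex1I[of _ B])
      show "B \<in> set Phi \<union> P \<and> p \<in> B" using B by simp
      fix B' assume B': "B' \<in> set Phi \<union> P \<and> p \<in> B'"
      have "B' \<notin> P" using B' True U2 by blast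
      then have "B' \<in> set Phi" using B' by blast
      then show "B' = B" using D1 B B' unfolding pairwise_def disjnt_def by blast
    qed
  next
    case False
    then obtain B where B: "B \<in> P" "p \<in> B" using U2 p by blast
    show ?thesis
    proof (rule ex1I[of _ B])
      show "B \<in> set Phi \<union> P \<and> p \<in> B" using B by simp
      fix B' assume B': "B' \<in> set Phi \<union> P \<and> p \<in> B'"
      have "B' \<notin> set Phi" using B' False U1 by blast
      then have "B' \<in> P" using B' by blast
      then show "B' = B" using D2 B B' unfolding pairwise_def disjnt_def by blast
    qed
  qed
  moreover have "\<forall>B\<in>set Phi \<union> P. B \<subseteq> {1..n}" using U1 U2 A(1) by blast
  ultimately show "blocks_ok n Phi P" unfolding blocks_ok_def by blast
qed

lemma setcomp_blocks_ok:
  assumes "set_composition Phi {1..n}"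
  shows "blocks_ok n Phi {}"
proof -
  have U1: "\<Union>(set Phi) = {1..n}" and D1: "disjoint (set Phi)"
    using assms by (auto simp: set_composition_def partition_on_def)
  have "\<exists>!B. B \<in> set Phi \<union> {} \<and> p \<in> B" if p: "p \<in> {1..n}" for p
  proof -
    obtain B where B: "B \<in> set Phi" "p \<in> B" using U1 p by blast
    show ?thesis
    proof (rule ex1I[of _ B])
      show "B \<in> set Phi \<union> {} \<and> p \<in> B" using B by simp
      fix B' assume B': "B' \<in> set Phi \<union> {} \<and> p \<in> B'"
      then show "B' = B" using D1 B unfolding pairwise_def disjnt_def by blast
    qed
  qed
  moreover have "\<forall>B\<in>set Phi \<union> {}. B \<subseteq> {1..n}" using U1 by blast
  ultimately show ?thesis unfolding blocks_ok_def by blast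
qed

lemma count_pos: "count_list w a = card {i. i < length w \<and> w ! i = a}"
  by (simp add: count_list_eq_length_filter length_filter_conv_card eq_commute)

lemma fits_len: "fits n Phi P w \<Longrightarrow> length w = n"
  by (simp add: fits_def)

lemma fits_eq:
  assumes "fits n Phi P w" "i < n" "j < n"
  shows "w ! i = w ! j \<longleftrightarrow> (\<exists>B\<in>set Phi \<union> P. Suc i \<in> B \<and> Suc j \<in> B)"
proof -
  have "\<forall>j\<in>{1..n}. \<forall>k\<in>{1..n}. (w ! (j - 1) = w ! (k - 1)) \<longleftrightarrow> (\<exists>B \<in> set Phi \<union> P. j \<in> B \<and> k \<in> B)"
    using assms(1) unfolding fits_def by blast
  moreover have "Suc i \<in> {1..n}" "Suc j \<in> {1..n}" using assms(2,3) by auto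
  ultimately have "(w ! (Suc i - 1) = w ! (Suc j - 1)) \<longleftrightarrow> (\<exists>B \<in> set Phi \<union> P. Suc i \<in> B \<and> Suc j \<in> B)"
    by blast
  then show ?thesis by simp
qed

lemma fits_count:
  assumes f: "fits n Phi P w" and ok: "blocks_ok n Phi P" and i: "i < n"
    and B: "B \<in> set Phi \<union> P" "Suc i \<in> B"
  shows "count_list w (w ! i) = card B"
proof -
  have len: "length w = n" using f by (simp add: fits_def)
  have Bsub: "B \<subseteq> {1..n}" using ok B unfolding blocks_ok_def by blast
  have uniq: "\<And>B'. B' \<in> set Phi \<union> P \<Longrightarrow> Suc i \<in> B' \<Longrightarrow> B' = B"
  proof -
    fix B' assume "B' \<in> set Phi \<union> P" "Suc i \<in> B'"
    moreover have "Suc i \<in> {1..n}" using i by simp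
    ultimately show "B' = B" using ok B unfolding blocks_ok_def by blast
  qed
  have "{j. j < length w \<and> w ! j = w ! i} = (\<lambda>p. p - 1) ` B"
  proof (intro equalityI subsetI)
    fix j assume "j \<in> {j. j < length w \<and> w ! j = w ! i}"
    then have j: "j < n" "w ! j = w ! i" using len by auto
    then obtain B' where "B' \<in> set Phi \<union> P" "Suc j \<in> B'" "Suc i \<in> B'" using fits_eq[OF f j(1) i] by auto
    then have "Suc j \<in> B" using uniq by blast
    then show "j \<in> (\<lambda>p. p - 1) ` B" by force
  next
    fix j assume "j \<in> (\<lambda>p. p - 1) ` B"
    then obtain p where p: "p \<in> B" "j = p - 1" by blast
    have p1: "p \<in> {1..n}" using p Bsub by blast
    then have sj: "Suc j = p" "j < n" using p by auto
    have "w ! j = w ! i" using fits_eq[OF f sj(2) i] B sj p by auto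
    then show "j \<in> {j. j < length w \<and> w ! j = w ! i}" using sj len by auto
  qed
  moreover have "inj_on (\<lambda>p. p - 1) B"
  proof (rule inj_onI)
    fix x y assume "x \<in> B" "y \<in> B" "x - 1 = y - 1"
    moreover have "1 \<le> x" "1 \<le> y" using Bsub \<open>x \<in> B\<close> \<open>y \<in> B\<close> by auto
    ultimately show "x = y" by arith
  qed
  ultimately show ?thesis by (simp add: count_pos card_image)
qed

lemma equiv_from_pos:
  fixes w w' :: "'a::linorder list"
  assumes len: "length w' = length w"
    and eq: "\<forall>i<length w. \<forall>j<length w. w ! i = w ! j \<longleftrightarrow> w' ! i = w' ! j"
    and ord: "\<forall>i<length w. \<forall>j<length w. r \<le> count_list w (w ! i) \<longrightarrow> r \<le> count_list w (w ! j)
                \<longrightarrow> (w ! i < w ! j \<longleftrightarrow> w' ! i < w' ! j)"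
  shows "equiv_r r w w'"
proof -
  define ix where "ix = (\<lambda>a. SOME i. i < length w \<and> w ! i = a)"
  have ix: "ix a < length w \<and> w ! (ix a) = a" if "a \<in> set w" for a
    unfolding ix_def by (rule someI_ex) (use that in \<open>auto simp: in_set_conv_nth\<close>)
  define \<phi> where "\<phi> = (\<lambda>a. w' ! ix a)"
  have phi_nth: "\<phi> (w ! i) = w' ! i" if "i < length w" for i
  proof -
    have "ix (w ! i) < length w" "w ! ix (w ! i) = w ! i" using ix[of "w ! i"] that by auto
    then show ?thesis using eq that by (simp add: \<phi>_def)
  qed
  have "map \<phi> w = w'"
    by (rule nth_equalityI) (use len phi_nth in auto)
  moreover have "inj_on \<phi> (set w)"
  proof (rule inj_onI)
    fix a b assume a: "a \<in> set w" and b: "b \<in> set w" and e: "\<phi> a = \<phi> b"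
    have "w' ! ix a = w' ! ix b" using e by (simp add: \<phi>_def)
    then have "w ! ix a = w ! ix b" using eq ix[OF a] ix[OF b] by blast
    then show "a = b" using ix[OF a] ix[OF b] by simp
  qed
  moreover have "\<forall>a\<in>set w. \<forall>b\<in>set w. r \<le> count_list w a \<longrightarrow> r \<le> count_list w b \<longrightarrow> (a < b \<longleftrightarrow> \<phi> a < \<phi> b)"
  proof (intro ballI impI)
    fix a b assume a: "a \<in> set w" and b: "b \<in> set w" and ca: "r \<le> count_list w a" and cb: "r \<le> count_list w b"
    have "\<phi> a = w' ! ix a" "\<phi> b = w' ! ix b" by (simp_all add: \<phi>_def)
    then show "a < b \<longleftrightarrow> \<phi> a < \<phi> b" using ord ix[OF a] ix[OF b] ca cb by metis
  qed
  ultimately show ?thesis unfolding equiv_r_def by blast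
qed

lemma fits_equiv:
  assumes f: "fits n Phi P w" and f': "fits n Phi P w'" and ok: "blocks_ok n Phi P"
    and small: "\<forall>B\<in>P. card B < r"
  shows "equiv_r r w w'"
proof (rule equiv_from_pos)
  have len: "length w = n" "length w' = n" using f f' by (simp_all add: fits_def)
  then show "length w' = length w" by simp
  show "\<forall>i<length w. \<forall>j<length w. w ! i = w ! j \<longleftrightarrow> w' ! i = w' ! j"
    using fits_eq[OF f] fits_eq[OF f'] len by simp
  have blk: "\<exists>l<length Phi. Suc i \<in> Phi ! l \<and> (\<forall>B\<in>set Phi \<union> P. Suc i \<in> B \<longrightarrow> B = Phi ! l)"
    if i: "i < n" and c: "r \<le> count_list w (w ! i)" for i
  proof -
    have "Suc i \<in> {1..n}" using i by simp
    then obtain B where B: "B \<in> set Phi \<union> P" "Suc i \<in> B" and u: "\<forall>B'. B' \<in> set Phi \<union> P \<and> Suc i \<in> B' \<longrightarrow> B' = B"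
      using ok unfolding blocks_ok_def by metis
    have "card B = count_list w (w ! i)" using fits_count[OF f ok i B] by simp
    then have "B \<notin> P" using small c by fastforce
    then have "B \<in> set Phi" using B by blast
    then obtain l where "l < length Phi" "Phi ! l = B" by (meson in_set_conv_nth)
    then show ?thesis using B u by blast
  qed
  show "\<forall>i<length w. \<forall>j<length w. r \<le> count_list w (w ! i) \<longrightarrow> r \<le> count_list w (w ! j)
                \<longrightarrow> (w ! i < w ! j \<longleftrightarrow> w' ! i < w' ! j)"
  proof (intro allI impI)
    fix i j assume i: "i < length w" and j: "j < length w" and ci: "r \<le> count_list w (w ! i)" and cj: "r \<le> count_list w (w ! j)"
    obtain l where l: "l < length Phi" "Suc i \<in> Phi ! l" using blk[of i] i ci len by auto
    obtain m where m: "m < length Phi" "Suc j \<in> Phi ! m" using blk[of j] j cj len by auto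
    have o: "\<forall>l m j k. l < m \<and> m < length Phi \<and> j \<in> Phi ! l \<and> k \<in> Phi ! m \<longrightarrow> w ! (j - 1) < w ! (k - 1)"
      using f by (simp add: fits_def)
    have o': "\<forall>l m j k. l < m \<and> m < length Phi \<and> j \<in> Phi ! l \<and> k \<in> Phi ! m \<longrightarrow> w' ! (j - 1) < w' ! (k - 1)"
      using f' by (simp add: fits_def)
    consider "l < m" | "l = m" | "m < l" by linarith
    then show "w ! i < w ! j \<longleftrightarrow> w' ! i < w' ! j"
    proof cases
      case 1
      have "w ! (Suc i - 1) < w ! (Suc j - 1)" "w' ! (Suc i - 1) < w' ! (Suc j - 1)"
        using o o' l m 1 by blast+
      then show ?thesis by simp
    next
      case 2
      have "w ! i = w ! j" "w' ! i = w' ! j"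
        using fits_eq[OF f] fits_eq[OF f'] i j len l m 2 nth_mem[OF l(1)] by auto
      then show ?thesis by simp
    next
      case 3
      have "w ! (Suc j - 1) < w ! (Suc i - 1)" "w' ! (Suc j - 1) < w' ! (Suc i - 1)"
        using o o' l m 3 by blast+
      then have "w ! j < w ! i" "w' ! j < w' ! i" by simp_all
      then show ?thesis by auto
    qed
  qed
qed

lemma equiv_fits:
  assumes f: "fits n Phi P w" and e: "equiv_r r w w'" and ok: "blocks_ok n Phi P"
    and big: "\<forall>B\<in>set Phi. r \<le> card B"
  shows "fits n Phi P w'"
proof -
  obtain \<phi> where m: "map \<phi> w = w'" and inj: "inj_on \<phi> (set w)"
    and ord: "\<forall>a\<in>set w. \<forall>b\<in>set w. r \<le> count_list w a \<longrightarrow> r \<le> count_list w b \<longrightarrow> (a < b \<longleftrightarrow> \<phi> a < \<phi> b)"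
    using e unfolding equiv_r_def by blast
  have len: "length w = n" using f by (simp add: fits_def)
  have len': "length w' = n" using m len by auto
  have nth': "w' ! i = \<phi> (w ! i)" if "i < n" for i using m len that by auto
  have eqi: "w' ! i = w' ! j \<longleftrightarrow> w ! i = w ! j" if "i < n" "j < n" for i j
    using nth'[OF that(1)] nth'[OF that(2)] inj that len by (metis inj_on_eq_iff nth_mem)
  have A: "\<forall>j\<in>{1..n}. \<forall>k\<in>{1..n}. (w' ! (j - 1) = w' ! (k - 1)) \<longleftrightarrow> (\<exists>B \<in> set Phi \<union> P. j \<in> B \<and> k \<in> B)"
  proof (intro ballI)
    fix j k assume j: "j \<in> {1..n}" and k: "k \<in> {1..n}"
    have "w' ! (j - 1) = w' ! (k - 1) \<longleftrightarrow> w ! (j - 1) = w ! (k - 1)" using j k by (intro eqi) auto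
    also have "\<dots> \<longleftrightarrow> (\<exists>B \<in> set Phi \<union> P. j \<in> B \<and> k \<in> B)" using f j k unfolding fits_def by blast
    finally show "(w' ! (j - 1) = w' ! (k - 1)) \<longleftrightarrow> (\<exists>B \<in> set Phi \<union> P. j \<in> B \<and> k \<in> B)" .
  qed
  have B: "\<forall>l m j k. l < m \<and> m < length Phi \<and> j \<in> Phi ! l \<and> k \<in> Phi ! m \<longrightarrow> w' ! (j - 1) < w' ! (k - 1)"
  proof (intro allI impI)
    fix l m j k assume h: "l < m \<and> m < length Phi \<and> j \<in> Phi ! l \<and> k \<in> Phi ! m"
    have lt: "w ! (j - 1) < w ! (k - 1)" using f h unfolding fits_def by blast
    have Bl: "Phi ! l \<in> set Phi \<union> P" "Phi ! m \<in> set Phi \<union> P" using h by auto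
    have jn: "j \<in> {1..n}" "k \<in> {1..n}" using ok Bl h unfolding blocks_ok_def by blast+
    then have jn': "j - 1 < n" "k - 1 < n" "Suc (j - 1) = j" "Suc (k - 1) = k" by auto
    have cj: "count_list w (w ! (j - 1)) = card (Phi ! l)"
      by (rule fits_count[OF f ok jn'(1) Bl(1)]) (use h jn' in simp)
    have ck: "count_list w (w ! (k - 1)) = card (Phi ! m)"
      by (rule fits_count[OF f ok jn'(2) Bl(2)]) (use h jn' in simp)
    have "r \<le> card (Phi ! l)" "r \<le> card (Phi ! m)" using big h by auto
    then have "\<phi> (w ! (j - 1)) < \<phi> (w ! (k - 1))"
      using ord lt cj ck jn'(1,2) len by (metis nth_mem)
    then show "w' ! (j - 1) < w' ! (k - 1)" using nth' jn' by simp
  qed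
  show ?thesis unfolding fits_def using len' A B by blast
qed

lemma exists_rsc:
  fixes w :: "nat list"
  shows "\<exists>Phi P. r_set_composition r (length w) Phi P \<and> fits (length w) Phi P w"
proof -
  define n where "n = length w"
  define blk where "blk = (\<lambda>a. {p \<in> {1..n}. w ! (p - 1) = a})"
  have F1: "card (blk a) = count_list w a" for a
  proof -
    have "blk a = Suc ` {i. i < length w \<and> w ! i = a}"
    proof (intro equalityI subsetI)
      fix p assume "p \<in> blk a"
      then have "p - 1 \<in> {i. i < length w \<and> w ! i = a}" "p = Suc (p - 1)" by (auto simp: blk_def n_def)
      then show "p \<in> Suc ` {i. i < length w \<and> w ! i = a}" by blast
    qed (auto simp: blk_def n_def)
    then show ?thesis by (simp add: count_pos card_image)
  qed
  have F2: "blk a \<noteq> {}" if "a \<in> set w" for a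
  proof -
    from that obtain i where "i < length w" "w ! i = a" by (auto simp: in_set_conv_nth)
    then have "Suc i \<in> blk a" by (auto simp: blk_def n_def)
    then show ?thesis by blast
  qed
  have F3: "blk a \<inter> blk b = {}" if "a \<noteq> b" for a b using that by (auto simp: blk_def)
  have F4: "p \<in> blk (w ! (p - 1))" "w ! (p - 1) \<in> set w" if "p \<in> {1..n}" for p
    using that by (auto simp: blk_def n_def)
  have F5: "blk a \<subseteq> {1..n}" for a by (auto simp: blk_def)
  define Lb where "Lb = {a \<in> set w. r \<le> count_list w a}"
  have finLb: "finite Lb" by (simp add: Lb_def)
  define s where "s = sorted_list_of_set Lb"
  have ss: "set s = Lb" "distinct s" "sorted_wrt (<) s"
    using finLb by (simp_all add: s_def strict_sorted_list_of_set)
  define Phi where "Phi = map blk s"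
  define P where "P = blk ` (set w - Lb)"
  define A where "A = \<Union>(blk ` Lb)"
  have injb: "inj_on blk (set w)"
  proof (rule inj_onI)
    fix a b assume a: "a \<in> set w" and "b \<in> set w" and e: "blk a = blk b"
    show "a = b"
    proof (rule ccontr)
      assume "a \<noteq> b"
      then have "blk a = {}" using F3[of a b] e by simp
      then show False using F2[OF a] by simp
    qed
  qed
  have setPhi: "set Phi = blk ` Lb" using ss by (simp add: Phi_def)
  have LbW: "Lb \<subseteq> set w" by (auto simp: Lb_def)
  have "r_set_composition r n Phi P"
    unfolding r_set_composition_def
  proof (intro exI conjI)
    show "A \<subseteq> {1..n}" using F5 by (auto simp: A_def)
    show "set_composition Phi A"
      unfolding set_composition_def
    proof
      show "distinct Phi" unfolding Phi_def using ss injb LbW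
        by (simp add: distinct_map inj_on_subset)
      show "partition_on A (set Phi)"
      proof (rule partition_onI)
        show "\<Union>(set Phi) = A" by (simp add: setPhi A_def)
        show "disjnt p q" if pq: "p \<in> set Phi" "q \<in> set Phi" "p \<noteq> q" for p q
        proof -
          obtain a b where ab: "p = blk a" "q = blk b" using pq(1,2) setPhi by auto
          then have "a \<noteq> b" using pq(3) by auto
          then show ?thesis using F3 ab by (simp add: disjnt_def)
        qed
        show "{} \<notin> set Phi" using F2 LbW by (auto simp: setPhi)
      qed
    qed
    show "\<forall>B\<in>set Phi. r \<le> card B" by (auto simp: setPhi F1 Lb_def)
    show "partition_on ({1..n} - A) P"
    proof (rule partition_onI)
      show "\<Union>P = {1..n} - A"
      proof (intro equalityI subsetI)
        fix p assume "p \<in> \<Union>P"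
        then obtain a where a: "a \<in> set w - Lb" "p \<in> blk a" by (auto simp: P_def)
        have "p \<notin> A"
        proof
          assume "p \<in> A"
          then obtain b where "b \<in> Lb" "p \<in> blk b" by (auto simp: A_def)
          then show False using a F3[of a b] by auto
        qed
        moreover have "p \<in> {1..n}" using a(2) F5[of a] by blast
        ultimately show "p \<in> {1..n} - A" by blast
      next
        fix p assume p: "p \<in> {1..n} - A"
        have "w ! (p - 1) \<notin> Lb" using F4[of p] p by (auto simp: A_def)
        then show "p \<in> \<Union>P" using F4[of p] p by (auto simp: P_def)
      qed
      show "disjnt p q" if pq: "p \<in> P" "q \<in> P" "p \<noteq> q" for p q
      proof -
        obtain a b where ab: "p = blk a" "q = blk b" using pq(1,2) by (auto simp: P_def)
        then have "a \<noteq> b" using pq(3) by auto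
        then show ?thesis using F3 ab by (simp add: disjnt_def)
      qed
      show "{} \<notin> P" using F2 by (auto simp: P_def)
    qed
    show "\<forall>B\<in>P. card B < r" by (auto simp: P_def F1 Lb_def)
  qed
  moreover have "fits n Phi P w"
    unfolding fits_def
  proof (intro conjI ballI allI impI)
    show "length w = n" by (simp add: n_def)
    fix j k assume j: "j \<in> {1..n}" and k: "k \<in> {1..n}"
    show "(w ! (j - 1) = w ! (k - 1)) \<longleftrightarrow> (\<exists>B \<in> set Phi \<union> P. j \<in> B \<and> k \<in> B)"
    proof
      assume e: "w ! (j - 1) = w ! (k - 1)"
      have "blk (w ! (j - 1)) \<in> set Phi \<union> P" using F4(2)[OF j] by (auto simp: setPhi P_def)
      moreover have "j \<in> blk (w ! (j - 1))" "k \<in> blk (w ! (j - 1))" using F4(1)[OF j] F4(1)[OF k] e by auto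
      ultimately show "\<exists>B \<in> set Phi \<union> P. j \<in> B \<and> k \<in> B" by blast
    next
      assume "\<exists>B \<in> set Phi \<union> P. j \<in> B \<and> k \<in> B"
      then obtain a where "j \<in> blk a" "k \<in> blk a" by (auto simp: setPhi P_def)
      then show "w ! (j - 1) = w ! (k - 1)" by (auto simp: blk_def)
    qed
  next
    fix l m j k assume h: "l < m \<and> m < length Phi \<and> j \<in> Phi ! l \<and> k \<in> Phi ! m"
    then have lm: "l < length s" "m < length s" "l < m" by (auto simp: Phi_def)
    have "w ! (j - 1) = s ! l" "w ! (k - 1) = s ! m" using h lm by (auto simp: Phi_def blk_def)
    moreover have "s ! l < s ! m" using sorted_wrt_nth_less[OF ss(3) lm(3) lm(2)] .
    ultimately show "w ! (j - 1) < w ! (k - 1)" by simp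
  qed
  ultimately show ?thesis unfolding n_def by blast
qed

definition ind :: "nat \<Rightarrow> nat list \<Rightarrow> series" where
  "ind r w = (\<lambda>x. if equiv_r r w x then 1 else 0)"

definition Gen :: "nat \<Rightarrow> series set" where
  "Gen r = {M n Phi P | n Phi P. r_set_composition r n Phi P}"

lemma NCQSym_r_Gen: "NCQSym_r r = lin_span (Gen r)"
  by (simp add: NCQSym_r_def Gen_def)

lemma M_ind:
  assumes rsc: "r_set_composition r n Phi P" and f: "fits n Phi P w"
  shows "M n Phi P = ind r w"
proof (rule ext)
  fix x
  have ok: "blocks_ok n Phi P" and small: "\<forall>B\<in>P. card B < r" and big: "\<forall>B\<in>set Phi. r \<le> card B"
    using rsc_blocks_ok[OF rsc] by auto
  have "fits n Phi P x \<longleftrightarrow> equiv_r r w x"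
    using fits_equiv[OF f _ ok small] equiv_fits[OF f _ ok big] by blast
  then show "M n Phi P x = ind r w x" by (simp add: M_def ind_def)
qed

lemma ind_Gen: "ind r w \<in> Gen r"
proof -
  obtain Phi P where rsc: "r_set_composition r (length w) Phi P" and f: "fits (length w) Phi P w"
    using exists_rsc by blast
  have "M (length w) Phi P = ind r w" by (rule M_ind[OF rsc f])
  then show ?thesis unfolding Gen_def using rsc by force
qed

lemma M_Hc:
  assumes rsc: "r_set_composition r n Phi P"
  shows "M n Phi P \<in> Hc r"
proof -
  have ok: "blocks_ok n Phi P" and big: "\<forall>B\<in>set Phi. r \<le> card B"
    using rsc_blocks_ok[OF rsc] by auto
  have "bounded_degree (M n Phi P)"
    unfolding bounded_degree_def M_def by (rule exI[of _ n]) (auto simp: fits_def)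
  moreover have "M n Phi P w = M n Phi P w'" if e: "equiv_r r w w'" for w w'
    using equiv_fits[OF _ e ok big] equiv_fits[OF _ equiv_sym[OF e] ok big] by (auto simp: M_def)
  ultimately show ?thesis by (auto simp: Hc_def)
qed

lemma Gen_Hc: "Gen r \<subseteq> Hc r"
  using M_Hc by (auto simp: Gen_def)

lemma sum_Hc:
  assumes "finite S" "S \<subseteq> Hc r"
  shows "(\<lambda>x. \<Sum>b\<in>S. c b * b x) \<in> Hc r"
  using assms
proof (induction S rule: finite_induct)
  case empty
  then show ?case using Hc_zero by simp
next
  case (insert b S)
  then have "(\<lambda>x. c b * b x + (\<Sum>b\<in>S. c b * b x)) \<in> Hc r" by (intro Hc_lin) auto
  then show ?case using insert by simp
qed

lemma span_Hc: "lin_span (Gen r) \<subseteq> Hc r"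
  unfolding lin_span_def using sum_Hc Gen_Hc by blast

lemma decomp:
  fixes F :: "'a \<Rightarrow> rat" and Bs :: "('a \<Rightarrow> rat) set"
  assumes fin: "finite Bs" and sub: "Bs \<subseteq> G"
    and b01: "\<forall>b\<in>Bs. \<forall>x. b x = 0 \<or> b x = 1"
    and disj: "\<forall>b\<in>Bs. \<forall>b'\<in>Bs. \<forall>x. b x = 1 \<longrightarrow> b' x = 1 \<longrightarrow> b = b'"
    and const: "\<forall>b\<in>Bs. \<forall>x y. b x = 1 \<longrightarrow> b y = 1 \<longrightarrow> F x = F y"
    and cover: "\<forall>x. F x \<noteq> 0 \<longrightarrow> (\<exists>b\<in>Bs. b x = 1)"
  shows "F \<in> lin_span G"
proof -
  define c :: "('a \<Rightarrow> rat) \<Rightarrow> rat" where "c = (\<lambda>b. F (SOME y. b y = 1))"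
  have "F = (\<lambda>x. \<Sum>b\<in>Bs. c b * b x)"
  proof (rule ext)
    fix x
    show "F x = (\<Sum>b\<in>Bs. c b * b x)"
    proof (cases "\<exists>b\<in>Bs. b x = 1")
      case True
      then obtain b0 where b0: "b0 \<in> Bs" "b0 x = 1" by blast
      have "(\<Sum>b\<in>Bs. c b * b x) = c b0 * b0 x + (\<Sum>b\<in>Bs - {b0}. c b * b x)"
        using fin b0 by (simp add: sum.remove)
      also have "(\<Sum>b\<in>Bs - {b0}. c b * b x) = 0"
      proof (rule sum.neutral, rule ballI)
        fix b assume b: "b \<in> Bs - {b0}"
        then have "b x \<noteq> 1" using disj b0 by blast
        then have "b x = 0" using b01 b by blast
        then show "c b * b x = 0" by simp
      qed
      also have "c b0 = F x"
      proof -
        have "b0 (SOME y. b0 y = 1) = 1" using someI[of "\<lambda>y. b0 y = 1" x] b0(2) by simp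
        then have "F (SOME y. b0 y = 1) = F x" using const b0 by blast
        then show ?thesis unfolding c_def by simp
      qed
      finally show ?thesis using b0 by simp
    next
      case False
      then have "F x = 0" using cover by blast
      moreover have "b x = 0" if "b \<in> Bs" for b using False b01 that by blast
      then have "(\<Sum>b\<in>Bs. c b * b x) = 0" by (intro sum.neutral) simp
      ultimately show ?thesis by simp
    qed
  qed
  then show ?thesis unfolding lin_span_def using fin sub by blast
qed

lemma ind_01: "ind r w x = 0 \<or> ind r w x = 1" by (simp add: ind_def)

lemma ind_1: "ind r w x = 1 \<longleftrightarrow> equiv_r r w x" by (simp add: ind_def)

lemma ind_same: "equiv_r r w x \<Longrightarrow> equiv_r r w' x \<Longrightarrow> ind r w = ind r w'"
  unfolding ind_def by (rule ext) (meson equiv_sym equiv_trans)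

definition Wd :: "nat \<Rightarrow> nat list set" where
  "Wd d = {w. set w \<subseteq> {..<d} \<and> length w \<le> d}"

lemma finite_Wd: "finite (Wd d)"
  unfolding Wd_def by (rule finite_lists_length_le) simp

lemma pack_Wd: "length (x :: nat list) \<le> d \<Longrightarrow> pack_by (<) x \<in> Wd d"
  using set_pack_by[of x] by (auto simp: Wd_def)

lemma equiv_pack_x: "equiv_r r (pack_by (<) x) (x :: nat list)"
  using equiv_sym[OF equiv_pack] .

lemma Hc_span: "Hc r \<subseteq> lin_span (Gen r)"
proof
  fix f assume f: "f \<in> Hc r"
  obtain d where d: "\<forall>w. d < length w \<longrightarrow> f w = 0" using f by (auto simp: Hc_def bounded_degree_def)
  show "f \<in> lin_span (Gen r)"
  proof (rule decomp[where Bs = "ind r ` Wd d"])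
    show "finite (ind r ` Wd d)" using finite_Wd by simp
    show "ind r ` Wd d \<subseteq> Gen r" using ind_Gen by blast
    show "\<forall>b\<in>ind r ` Wd d. \<forall>x. b x = 0 \<or> b x = 1" using ind_01 by blast
    show "\<forall>b\<in>ind r ` Wd d. \<forall>b'\<in>ind r ` Wd d. \<forall>x. b x = 1 \<longrightarrow> b' x = 1 \<longrightarrow> b = b'"
      using ind_same by (auto simp: ind_1)
    show "\<forall>b\<in>ind r ` Wd d. \<forall>x y. b x = 1 \<longrightarrow> b y = 1 \<longrightarrow> f x = f y"
    proof (intro ballI allI impI)
      fix b x y assume "b \<in> ind r ` Wd d" "b x = 1" "b y = 1"
      then obtain w where "b = ind r w" "b x = 1" "b y = 1" by blast
      then have "equiv_r r w x" "equiv_r r w y" by (simp_all add: ind_1)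
      then have "equiv_r r x y" using equiv_sym equiv_trans by blast
      then show "f x = f y" using f by (simp add: Hc_D)
    qed
    show "\<forall>x. f x \<noteq> 0 \<longrightarrow> (\<exists>b\<in>ind r ` Wd d. b x = 1)"
    proof (intro allI impI)
      fix x assume "f x \<noteq> 0"
      then have "length x \<le> d" using d by (meson not_le)
      then have "pack_by (<) x \<in> Wd d" by (rule pack_Wd)
      moreover have "ind r (pack_by (<) x) x = 1" using equiv_pack_x[of r x] by (simp add: ind_1)
      ultimately show "\<exists>b\<in>ind r ` Wd d. b x = 1" by blast
    qed
  qed
qed

lemma NCQSym_r_Hc: "NCQSym_r r = Hc r"
  using span_Hc Hc_span NCQSym_r_Gen by blast

lemma Hc_NCQSym: "Hc r \<subseteq> NCQSym"
proof
  fix f assume f: "f \<in> Hc r"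
  have "f w = f w'" if "set_composition Phi {1..n}" "fits n Phi {} w" "fits n Phi {} w'" for n Phi w w'
    using fits_equiv[OF that(2,3) setcomp_blocks_ok[OF that(1)]] f by (simp add: Hc_D)
  then show "f \<in> NCQSym" using f by (auto simp: NCQSym_def Hc_def)
qed

lemma ind_Hc: "ind r w \<in> Hc r"
  using ind_Gen Gen_Hc by blast

lemma coprod_tensor:
  assumes f: "f \<in> Hc r"
  shows "coprod f \<in> tensor_space (Hc r) (Hc r)"
proof -
  obtain d where d: "\<forall>w. d < length w \<longrightarrow> f w = 0" using f by (auto simp: Hc_def bounded_degree_def)
  define Bs where "Bs = (\<lambda>(w1, w2). tensor (ind r w1) (ind r w2)) ` (Wd d \<times> Wd d)"
  have tv: "tensor (ind r w1) (ind r w2) (u, v) = 1 \<longleftrightarrow> equiv_r r w1 u \<and> equiv_r r w2 v" for w1 w2 u v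
    by (simp add: tensor_def ind_def)
  show ?thesis
    unfolding tensor_space_def
  proof (rule decomp[where Bs = Bs])
    show "finite Bs" using finite_Wd by (simp add: Bs_def)
    show "Bs \<subseteq> {tensor f g |f g. f \<in> Hc r \<and> g \<in> Hc r}" using ind_Hc by (auto simp: Bs_def)
    show "\<forall>b\<in>Bs. \<forall>x. b x = 0 \<or> b x = 1" by (auto simp: Bs_def tensor_def ind_def)
    show "\<forall>b\<in>Bs. \<forall>b'\<in>Bs. \<forall>x. b x = 1 \<longrightarrow> b' x = 1 \<longrightarrow> b = b'"
    proof (intro ballI allI impI)
      fix b b' x assume b: "b \<in> Bs" and b': "b' \<in> Bs" and bx: "b x = 1" and bx': "b' x = 1"
      obtain w1 w2 where bb: "b = tensor (ind r w1) (ind r w2)" using b by (auto simp: Bs_def)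
      obtain w1' w2' where bb': "b' = tensor (ind r w1') (ind r w2')" using b' by (auto simp: Bs_def)
      obtain u v where x: "x = (u, v)" by (cases x)
      have "ind r w1 = ind r w1'" "ind r w2 = ind r w2'"
        using bx bx' ind_same by (auto simp: bb bb' x tv)
      then show "b = b'" by (simp add: bb bb')
    qed
    show "\<forall>b\<in>Bs. \<forall>x y. b x = 1 \<longrightarrow> b y = 1 \<longrightarrow> coprod f x = coprod f y"
    proof (intro ballI allI impI)
      fix b x y assume b: "b \<in> Bs" and bx: "b x = 1" and "b y = 1"
      obtain w1 w2 where bb: "b = tensor (ind r w1) (ind r w2)" using b by (auto simp: Bs_def)
      obtain u v where x: "x = (u, v)" by (cases x)
      obtain u' v' where y: "y = (u', v')" by (cases y)
      have "equiv_r r w1 u" "equiv_r r w2 v" "equiv_r r w1 u'" "equiv_r r w2 v'"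
        using bx \<open>b y = 1\<close> by (auto simp: bb x y tv)
      then have "equiv_r r u u'" "equiv_r r v v'" by (meson equiv_sym equiv_trans)+
      then show "coprod f x = coprod f y" using coprod_equiv[OF f] x y by simp
    qed
    show "\<forall>x. coprod f x \<noteq> 0 \<longrightarrow> (\<exists>b\<in>Bs. b x = 1)"
    proof (intro allI impI)
      fix x assume nz: "coprod f x \<noteq> 0"
      obtain u v where x: "x = (u, v)" by (cases x)
      have "\<not> d < length u + length v" using nz coprod_bounded[OF d] x by blast
      then have "length u \<le> d" "length v \<le> d" by auto
      then have "tensor (ind r (pack_by (<) u)) (ind r (pack_by (<) v)) \<in> Bs"
        using pack_Wd by (auto simp: Bs_def)
      moreover have "tensor (ind r (pack_by (<) u)) (ind r (pack_by (<) v)) x = 1"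
        using equiv_pack_x by (simp add: x tv)
      ultimately show "\<exists>b\<in>Bs. b x = 1" by blast
    qed
  qed
qed

theorem mainTheorem3:
  fixes r :: nat
  assumes "0 < r"
  shows "NCQSym_r r \<subseteq> NCQSym
    \<and> (\<lambda>w. 0) \<in> NCQSym_r r
    \<and> (\<forall>f\<in>NCQSym_r r. \<forall>g\<in>NCQSym_r r. \<forall>c::rat. (\<lambda>w. c * f w + g w) \<in> NCQSym_r r)
    \<and> sone \<in> NCQSym_r r
    \<and> (\<forall>f\<in>NCQSym_r r. \<forall>g\<in>NCQSym_r r. smult f g \<in> NCQSym_r r)
    \<and> (\<forall>f\<in>NCQSym_r r. coprod f \<in> tensor_space (NCQSym_r r) (NCQSym_r r))
    \<and> (\<exists>S. is_antipode_on (NCQSym_r r) S)"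
proof -
  have sone: "sone \<in> Hc r"
  proof -
    have "sone = ind r []"
    proof (rule ext)
      fix x :: "nat list"
      have "equiv_r r ([] :: nat list) x \<longleftrightarrow> x = []" using equiv_Nil[of r "[] :: nat list" x] equiv_refl by auto
      then show "sone x = ind r [] x" by (simp add: sone_def ind_def)
    qed
    moreover have "ind r [] \<in> Hc r" by (rule ind_Hc)
    ultimately show ?thesis by (simp only:)
  qed
  have anti: "is_antipode_on (Hc r) (\<lambda>f w. Sa w f)"
    unfolding is_antipode_on_def
  proof (intro conjI ballI allI impI)
    fix f assume "f \<in> Hc r"
    then show "(\<lambda>w. Sa w f) \<in> Hc r" by (rule Sa_Hc)
  next
    fix f g c
    show "(\<lambda>w. Sa w (\<lambda>w. c * f w + g w)) = (\<lambda>w. c * Sa w f + Sa w g)"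
    proof (rule ext)
      fix w
      have "Sa w (\<lambda>y. \<Sum>i\<in>{0::nat, 1}. (if i = 0 then c else 1) * (if i = 0 then f else g) y)
          = (\<Sum>i\<in>{0::nat, 1}. (if i = 0 then c else 1) * Sa w (if i = 0 then f else g))"
        by (rule Sa_lin) simp
      then show "Sa w (\<lambda>w. c * f w + g w) = c * Sa w f + Sa w g" by simp
    qed
  next
    fix f a b and k :: nat
    assume h: "(\<forall>i<k. a i \<in> Hc r \<and> b i \<in> Hc r) \<and> coprod f = (\<lambda>p. \<Sum>i<k. tensor (a i) (b i) p)"
    show "(\<lambda>w. \<Sum>i<k. smult (\<lambda>w. Sa w (a i)) (b i) w) = (\<lambda>w. counit f * sone w)"
      using antipode_left[where f=f and k=k and a=a and b=b] h by blast
    show "(\<lambda>w. \<Sum>i<k. smult (a i) (\<lambda>w. Sa w (b i)) w) = (\<lambda>w. counit f * sone w)"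
      using antipode_right[where f=f and k=k and a=a and b=b] h by blast
  qed
  show ?thesis
    unfolding NCQSym_r_Hc
  proof (intro conjI)
    show "Hc r \<subseteq> NCQSym" by (rule Hc_NCQSym)
    show "(\<lambda>w. 0) \<in> Hc r" by (rule Hc_zero)
    show "\<forall>f\<in>Hc r. \<forall>g\<in>Hc r. \<forall>c::rat. (\<lambda>w. c * f w + g w) \<in> Hc r" using Hc_lin by blast
    show "sone \<in> Hc r" by (rule sone)
    show "\<forall>f\<in>Hc r. \<forall>g\<in>Hc r. smult f g \<in> Hc r" using smult_Hc by blast
    show "\<forall>f\<in>Hc r. coprod f \<in> tensor_space (Hc r) (Hc r)" using coprod_tensor by blast
    show "\<exists>S. is_antipode_on (Hc r) S" using anti by blast
  qed
qed

end
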